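(* Let $(X_1,d_1)$, $(X_2,d_2)$ be proper CAT(0) spaces, let $\Gamma$ be an infinite group acting convex co-compactly by isometries on $X_1$ and on $X_2$ via homomorphisms $\rho_i:\Gamma\to\mathrm{Isom}(X_i)$, and suppose the diagonal action $\rho=(\rho_1,\rho_2)$ of $\Gamma$ on $X_1\times X_2$ is convex co-compact. Let $\alpha\in\Gamma$ be such that $\rho_i(\alpha)$ is a rank one isometry of $X_i$ for $i=1,2$. Let $\beta\in\Gamma$ be an infinite order element such that, for $i=1,2$, $\rho_i(\beta)$ fixes the attractive and the repulsive fixed points of $\rho_i(\alpha)$ in the visual boundary $\partial X_i$. Then $\mathrm{slp}(\rho(\beta))=\mathrm{slp}(\rho(\alpha))$.
   Context: $X_1\times X_2$ carries the product metric $\sqrt{d_1^2+d_2^2}$. Convex co-compact: properly discontinuous isometric action with a nonempty closed invariant convex subset having compact quotient. A hyperbolic isometry $g$ (displacement $d(x,gx)$ attains its infimum $\ell(g)>0$) has an axis, a $g$-invariant geodesic line where the displacement is minimal; $g$ is rank one if an axis $l_g$ has the contraction property (some $K>0$ bounds the diameter of the nearest-point projection to $l_g$ of any ball disjoint from $l_g$). A rank one isometry $g$ has two fixed points $g_\pm\in\partial X$ (the endpoints of its axis) with $g^n\to g_+$ uniformly on compact subsets of $\partial X\setminus\{g_-\}$ as $n\to\infty$; $g_+$ is attractive and $g_-$ repulsive. Slope: for a geodesic ray $r$ in $X_1\times X_2$ with projections $r_i$, $\mathrm{slp}(r)=\infty$ if $r_2$ is constant, otherwise $d_1(r_1(0),r_1(1))/d_2(r_2(0),r_2(1))$;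 for a line $l$, $\mathrm{slp}(l)=\mathrm{slp}(l|_{[0,\infty)})$; for a hyperbolic isometry $g$ of $X_1\times X_2$, $\mathrm{slp}(g)$ is the slope of any of its axes. *)

theory Defs
  imports "HOL-Analysis.Analysis" "HOL-Algebra.Group"
begin

text \<open>Spaces are metric-space types; the product type carries the product metric
  sqrt(d1^2 + d2^2) (library instance, dist_prod_def).\<close>

definition isometry :: "('a::metric_space \<Rightarrow> 'a) \<Rightarrow> bool" where
  "isometry f \<longleftrightarrow> bij f \<and> (\<forall>x y. dist (f x) (f y) = dist x y)"

definition proper_space :: "'a::metric_space itself \<Rightarrow> bool" where
  "proper_space (T::'a itself) \<longleftrightarrow> (\<forall>(x::'a) r. compact (cball x r))"

definition geodesic_seg :: "(real \<Rightarrow> 'a::metric_space) \<Rightarrow> 'a \<Rightarrow> 'a \<Rightarrow> bool" where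
  "geodesic_seg c x y \<longleftrightarrow> c 0 = x \<and> c (dist x y) = y \<and>
     (\<forall>s\<in>{0..dist x y}. \<forall>t\<in>{0..dist x y}. dist (c s) (c t) = \<bar>s - t\<bar>)"

definition geodesic_space :: "'a::metric_space itself \<Rightarrow> bool" where
  "geodesic_space (T::'a itself) \<longleftrightarrow> (\<forall>x y::'a. \<exists>c. geodesic_seg c x y)"

text \<open>CAT(0): geodesic, and every geodesic triangle satisfies the CAT(0) inequality
  with respect to a Euclidean comparison triangle x', y', z' in the plane (= complex).
  Each side is a geodesic c from u to v of length l, whose comparison map is
  s |-> u' + (s/l)(v' - u').\<close>
definition CAT0 :: "'a::metric_space itself \<Rightarrow> bool" where
  "CAT0 (T::'a itself) \<longleftrightarrow> geodesic_space T \<and>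
    (\<forall>(x::'a) y z c1 c2 c3. geodesic_seg c1 x y \<and> geodesic_seg c2 y z \<and> geodesic_seg c3 z x \<longrightarrow>
      (\<forall>x' y' z' :: complex.
         dist x' y' = dist x y \<and> dist y' z' = dist y z \<and> dist z' x' = dist z x \<longrightarrow>
         (let sides = [(c1, x', y', dist x y), (c2, y', z', dist y z), (c3, z', x', dist z x)] in
          \<forall>(c, u, v, l)\<in>set sides. \<forall>(c', u', v', l')\<in>set sides.
            \<forall>s\<in>{0..l}. \<forall>t\<in>{0..l'}.
              dist (c s) (c' t) \<le> dist (u + of_real (s / l) * (v - u)) (u' + of_real (t / l') * (v' - u')))))"

definition geodesic_ray :: "(real \<Rightarrow> 'a::metric_space) \<Rightarrow> bool" where
  "geodesic_ray r \<longleftrightarrow> (\<forall>s\<ge>0. \<forall>t\<ge>0. dist (r s) (r t) = \<bar>s - t\<bar>)"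

definition geodesic_line :: "(real \<Rightarrow> 'a::metric_space) \<Rightarrow> bool" where
  "geodesic_line l \<longleftrightarrow> (\<forall>s t. dist (l s) (l t) = \<bar>s - t\<bar>)"

definition asymptotic :: "(real \<Rightarrow> 'a::metric_space) \<Rightarrow> (real \<Rightarrow> 'a) \<Rightarrow> bool" where
  "asymptotic r r' \<longleftrightarrow> (\<exists>C. \<forall>t\<ge>0. dist (r t) (r' t) \<le> C)"

text \<open>Points of the visual boundary are asymptote classes of geodesic rays.\<close>
definition bd_point :: "(real \<Rightarrow> 'a::metric_space) \<Rightarrow> (real \<Rightarrow> 'a) set" where
  "bd_point r = {r'. geodesic_ray r' \<and> asymptotic r r'}"

definition visual_boundary :: "'a::metric_space itself \<Rightarrow> (real \<Rightarrow> 'a) set set" where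
  "visual_boundary (T::'a itself) = {bd_point r | r::real \<Rightarrow> 'a. geodesic_ray r}"

definition bd_act :: "('a::metric_space \<Rightarrow> 'a) \<Rightarrow> (real \<Rightarrow> 'a) set \<Rightarrow> (real \<Rightarrow> 'a) set" where
  "bd_act g \<xi> = (\<lambda>r. g \<circ> r) ` \<xi>"

definition fixes_bd :: "('a::metric_space \<Rightarrow> 'a) \<Rightarrow> (real \<Rightarrow> 'a) set \<Rightarrow> bool" where
  "fixes_bd g \<xi> \<longleftrightarrow> bd_act g \<xi> = \<xi>"

definition endpoint_plus :: "(real \<Rightarrow> 'a::metric_space) \<Rightarrow> (real \<Rightarrow> 'a) set" where
  "endpoint_plus l = bd_point l"

definition endpoint_minus :: "(real \<Rightarrow> 'a::metric_space) \<Rightarrow> (real \<Rightarrow> 'a) set" where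
  "endpoint_minus l = bd_point (\<lambda>t. l (- t))"

definition translation_length :: "('a::metric_space \<Rightarrow> 'a) \<Rightarrow> real" where
  "translation_length g = Inf (range (\<lambda>x. dist x (g x)))"

definition hyperbolic :: "('a::metric_space \<Rightarrow> 'a) \<Rightarrow> bool" where
  "hyperbolic g \<longleftrightarrow> (\<exists>x. dist x (g x) = translation_length g) \<and> translation_length g > 0"

definition is_axis :: "('a::metric_space \<Rightarrow> 'a) \<Rightarrow> (real \<Rightarrow> 'a) \<Rightarrow> bool" where
  "is_axis g l \<longleftrightarrow> geodesic_line l \<and> g ` range l = range l \<and>
     (\<forall>t. dist (l t) (g (l t)) = translation_length g)"

definition nearest_proj :: "'a::metric_space set \<Rightarrow> 'a \<Rightarrow> 'a" where
  "nearest_proj S x = (SOME p. p \<in> S \<and> (\<forall>q\<in>S. dist x p \<le> dist x q))"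

definition contracting :: "(real \<Rightarrow> 'a::metric_space) \<Rightarrow> bool" where
  "contracting l \<longleftrightarrow> (\<exists>K>0. \<forall>x r. ball x r \<inter> range l = {} \<longrightarrow>
       diameter (nearest_proj (range l) ` ball x r) \<le> K)"

definition rank_one :: "('a::metric_space \<Rightarrow> 'a) \<Rightarrow> bool" where
  "rank_one g \<longleftrightarrow> hyperbolic g \<and> (\<exists>l. is_axis g l \<and> contracting l)"

definition isom_action :: "('g, 'm) monoid_scheme \<Rightarrow> ('g \<Rightarrow> 'a::metric_space \<Rightarrow> 'a) \<Rightarrow> bool" where
  "isom_action G \<rho> \<longleftrightarrow> (\<forall>g\<in>carrier G. isometry (\<rho> g)) \<and>
     (\<forall>g\<in>carrier G. \<forall>h\<in>carrier G. \<rho> (g \<otimes>\<^bsub>G\<^esub> h) = \<rho> g \<circ> \<rho> h)"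

definition properly_discontinuous :: "('g, 'm) monoid_scheme \<Rightarrow> ('g \<Rightarrow> 'a::metric_space \<Rightarrow> 'a) \<Rightarrow> bool" where
  "properly_discontinuous G \<rho> \<longleftrightarrow>
     (\<forall>K. compact K \<longrightarrow> finite {g\<in>carrier G. \<rho> g ` K \<inter> K \<noteq> {}})"

definition convex_set :: "'a::metric_space set \<Rightarrow> bool" where
  "convex_set C \<longleftrightarrow> (\<forall>x\<in>C. \<forall>y\<in>C. \<forall>c. geodesic_seg c x y \<longrightarrow> c ` {0..dist x y} \<subseteq> C)"

text \<open>Convex co-compact: properly discontinuous isometric action with a nonempty closed
  invariant convex subset C whose quotient is compact, i.e. C is covered by the
  translates of a compact subset of C.\<close>
definition convex_cocompact :: "('g, 'm) monoid_scheme \<Rightarrow> ('g \<Rightarrow> 'a::metric_space \<Rightarrow> 'a) \<Rightarrow> bool" where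
  "convex_cocompact G \<rho> \<longleftrightarrow> isom_action G \<rho> \<and> properly_discontinuous G \<rho> \<and>
     (\<exists>C. C \<noteq> {} \<and> closed C \<and> convex_set C \<and> (\<forall>g\<in>carrier G. \<rho> g ` C \<subseteq> C) \<and>
        (\<exists>K. compact K \<and> K \<subseteq> C \<and> C = (\<Union>g\<in>carrier G. \<rho> g ` K)))"

definition diag_action ::
  "('g \<Rightarrow> 'a \<Rightarrow> 'a) \<Rightarrow> ('g \<Rightarrow> 'b \<Rightarrow> 'b) \<Rightarrow> 'g \<Rightarrow> 'a \<times> 'b \<Rightarrow> 'a \<times> 'b" where
  "diag_action \<rho>1 \<rho>2 g = (\<lambda>(x, y). (\<rho>1 g x, \<rho>2 g y))"

definition slope_ray :: "(real \<Rightarrow> 'a::metric_space \<times> 'b::metric_space) \<Rightarrow> ereal" where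
  "slope_ray r = (if (\<forall>t\<ge>0. snd (r t) = snd (r 0)) then \<infinity>
     else ereal (dist (fst (r 0)) (fst (r 1)) / dist (snd (r 0)) (snd (r 1))))"

text \<open>Slope of a line = slope of its restriction to [0,oo); slope_ray only looks at t >= 0.\<close>
definition slope_line :: "(real \<Rightarrow> 'a::metric_space \<times> 'b::metric_space) \<Rightarrow> ereal" where
  "slope_line l = slope_ray l"

definition slope_isom :: "('a::metric_space \<times> 'b::metric_space \<Rightarrow> 'a \<times> 'b) \<Rightarrow> ereal" where
  "slope_isom g = slope_line (SOME l. is_axis g l)"

end

theory Submission
  imports Defs
begin


lemma isometry_dist: "isometry f \<Longrightarrow> dist (f x) (f y) = dist x y"
  unfolding isometry_def by auto

lemma tl_le: "translation_length g \<le> dist x (g x)"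
  unfolding translation_length_def by (rule cInf_lower) (auto intro: bdd_belowI[of _ 0])

lemma tl_ge: "(\<And>x. c \<le> dist x (g x)) \<Longrightarrow> c \<le> translation_length g"
  unfolding translation_length_def by (rule cInf_greatest) auto

lemma tl_eq: "(\<And>x. c \<le> dist x (g x)) \<Longrightarrow> dist x0 (g x0) = c \<Longrightarrow> translation_length g = c"
  using tl_le[of g x0] tl_ge[of c g] by auto

lemma tl_nonneg: "0 \<le> translation_length g"
  by (rule tl_ge) auto

lemma act_mult:
  assumes "isom_action G \<rho>" "a \<in> carrier G" "b \<in> carrier G"
  shows "\<rho> (a \<otimes>\<^bsub>G\<^esub> b) x = \<rho> a (\<rho> b x)"
  using assms unfolding isom_action_def by auto

lemma act_isom:
  assumes "isom_action G \<rho>" "a \<in> carrier G"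
  shows "isometry (\<rho> a)"
  using assms unfolding isom_action_def by auto

lemma act_one:
  assumes "group G" "isom_action G \<rho>"
  shows "\<rho> \<one>\<^bsub>G\<^esub> x = x"
proof -
  interpret group G by fact
  have b: "bij (\<rho> \<one>\<^bsub>G\<^esub>)" using act_isom[OF assms(2)] unfolding isometry_def by auto
  then obtain y where y: "x = \<rho> \<one>\<^bsub>G\<^esub> y" by (metis bij_pointE)
  have "\<rho> (\<one>\<^bsub>G\<^esub> \<otimes>\<^bsub>G\<^esub> \<one>\<^bsub>G\<^esub>) y = \<rho> \<one>\<^bsub>G\<^esub> (\<rho> \<one>\<^bsub>G\<^esub> y)"
    by (rule act_mult[OF assms(2)]) auto
  then have "\<rho> \<one>\<^bsub>G\<^esub> (\<rho> \<one>\<^bsub>G\<^esub> y) = \<rho> \<one>\<^bsub>G\<^esub> y" by simp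
  then show ?thesis using y by metis
qed

lemma act_pow_add:
  assumes "group G" "isom_action G \<rho>" "a \<in> carrier G"
  shows "\<rho> (a [^]\<^bsub>G\<^esub> (z + w::int)) x = \<rho> (a [^]\<^bsub>G\<^esub> z) (\<rho> (a [^]\<^bsub>G\<^esub> w) x)"
proof -
  interpret group G by fact
  show ?thesis using assms by (simp add: int_pow_mult act_mult)
qed

lemma act_pow_isom:
  assumes "group G" "isom_action G \<rho>" "a \<in> carrier G"
  shows "isometry (\<rho> (a [^]\<^bsub>G\<^esub> (z::int)))"
proof -
  interpret group G by fact
  show ?thesis using assms by (intro act_isom) auto
qed

lemma act_pow_zero:
  assumes "group G" "isom_action G \<rho>" "a \<in> carrier G"
  shows "\<rho> (a [^]\<^bsub>G\<^esub> (0::int)) x = x"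
  using act_one[OF assms(1,2)] by simp

lemma act_shift_nat:
  fixes l :: "real \<Rightarrow> 'a::metric_space"
  assumes "group G" "isom_action G \<rho>" "a \<in> carrier G"
    and "\<And>t. \<rho> (a [^]\<^bsub>G\<^esub> (p::int)) (l t) = l (t + c)"
  shows "\<rho> (a [^]\<^bsub>G\<^esub> (int n * p)) (l t) = l (t + real n * c)"
proof (induction n arbitrary: t)
  case 0
  then show ?case using act_pow_zero[OF assms(1-3)] by simp
next
  case (Suc n)
  have "int (Suc n) * p = p + int n * p" by (simp add: algebra_simps)
  then have "\<rho> (a [^]\<^bsub>G\<^esub> (int (Suc n) * p)) (l t) = \<rho> (a [^]\<^bsub>G\<^esub> p) (\<rho> (a [^]\<^bsub>G\<^esub> (int n * p)) (l t))"
    using act_pow_add[OF assms(1-3), of p "int n * p"] by simp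
  also have "\<dots> = l (t + real n * c + c)" using Suc assms(4) by simp
  finally show ?case by (simp add: algebra_simps)
qed

lemma act_shift_neg:
  fixes l :: "real \<Rightarrow> 'a::metric_space"
  assumes "group G" "isom_action G \<rho>" "a \<in> carrier G"
    and "\<And>t. \<rho> (a [^]\<^bsub>G\<^esub> (p::int)) (l t) = l (t + c)"
  shows "\<rho> (a [^]\<^bsub>G\<^esub> (- p)) (l t) = l (t + - c)"
proof -
  have "\<rho> (a [^]\<^bsub>G\<^esub> (- p)) (l (t - c + c)) = \<rho> (a [^]\<^bsub>G\<^esub> (- p)) (\<rho> (a [^]\<^bsub>G\<^esub> p) (l (t - c)))"
    using assms(4)[of "t - c"] by simp
  also have "\<dots> = \<rho> (a [^]\<^bsub>G\<^esub> (- p + p)) (l (t - c))"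
    using act_pow_add[OF assms(1-3), of "-p" p] by simp
  also have "\<dots> = l (t - c)" using act_pow_zero[OF assms(1-3)] by simp
  finally show ?thesis by simp
qed

lemma act_shift_int:
  fixes l :: "real \<Rightarrow> 'a::metric_space"
  assumes "group G" "isom_action G \<rho>" "a \<in> carrier G"
    and "\<And>t. \<rho> (a [^]\<^bsub>G\<^esub> (p::int)) (l t) = l (t + c)"
  shows "\<rho> (a [^]\<^bsub>G\<^esub> (z * p)) (l t) = l (t + real_of_int z * c)"
proof (cases "z \<ge> 0")
  case True
  then obtain n where "z = int n" using nonneg_int_cases by blast
  then show ?thesis using act_shift_nat[of G \<rho> a p l c n t, OF assms] by simp
next
  case False
  define n where "n = nat (- z)"
  have n: "z = - int n" using False n_def by simp
  have "\<And>t. \<rho> (a [^]\<^bsub>G\<^esub> (- p)) (l t) = l (t + - c)" using act_shift_neg[of G \<rho> a p l c, OF assms] by simp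
  from act_shift_nat[of G \<rho> a "-p" l "-c" n t, OF assms(1-3) this] n show ?thesis by (simp add: algebra_simps)
qed

lemma dist_pow_le:
  assumes "group G" "isom_action G \<rho>" "a \<in> carrier G"
  shows "dist y (\<rho> (a [^]\<^bsub>G\<^esub> (int n * p)) y) \<le> real n * dist y (\<rho> (a [^]\<^bsub>G\<^esub> p) y)"
proof (induction n)
  case 0
  then show ?case using act_pow_zero[OF assms] by simp
next
  case (Suc n)
  have e: "int (Suc n) * p = int n * p + p" by (simp add: algebra_simps)
  have "dist y (\<rho> (a [^]\<^bsub>G\<^esub> (int (Suc n) * p)) y)
     \<le> dist y (\<rho> (a [^]\<^bsub>G\<^esub> (int n * p)) y) + dist (\<rho> (a [^]\<^bsub>G\<^esub> (int n * p)) y) (\<rho> (a [^]\<^bsub>G\<^esub> (int (Suc n) * p)) y)"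
    by (rule dist_triangle)
  also have "dist (\<rho> (a [^]\<^bsub>G\<^esub> (int n * p)) y) (\<rho> (a [^]\<^bsub>G\<^esub> (int (Suc n) * p)) y) = dist y (\<rho> (a [^]\<^bsub>G\<^esub> p) y)"
  proof -
    have "\<rho> (a [^]\<^bsub>G\<^esub> (int (Suc n) * p)) y = \<rho> (a [^]\<^bsub>G\<^esub> (int n * p)) (\<rho> (a [^]\<^bsub>G\<^esub> p) y)"
      using e act_pow_add[OF assms, of "int n * p" p y] by simp
    then show ?thesis using isometry_dist[OF act_pow_isom[OF assms, of "int n * p"], of y "\<rho> (a [^]\<^bsub>G\<^esub> p) y"] by simp
  qed
  finally show ?case using Suc by (simp add: algebra_simps)
qed


lemma gl_dist: "geodesic_line l \<Longrightarrow> dist (l s) (l t) = \<bar>s - t\<bar>"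
  unfolding geodesic_line_def by auto

lemma gl_inj: "geodesic_line l \<Longrightarrow> l s = l t \<Longrightarrow> s = t"
  using gl_dist[of l s t] by auto

lemma gl_rev: "geodesic_line l \<Longrightarrow> geodesic_line (\<lambda>t. l (- t))"
  unfolding geodesic_line_def by (auto simp: abs_minus_commute)

lemma range_rev: fixes l :: "real \<Rightarrow> 'a" shows "range (\<lambda>t. l (- t)) = range l"
proof
  show "range (\<lambda>t. l (- t)) \<subseteq> range l" by auto
  show "range l \<subseteq> range (\<lambda>t. l (- t))"
  proof
    fix y assume "y \<in> range l"
    then obtain t where "y = l t" by auto
    then show "y \<in> range (\<lambda>t. l (- t))" using rangeI[of "\<lambda>t. l (- t)" "- t"] by simp
  qed
qed

lemma gl_cont: "geodesic_line l \<Longrightarrow> continuous_on S l"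
  by (rule lipschitz_on_continuous_on[of 1]) (auto intro!: lipschitz_onI simp: gl_dist dist_real_def)

lemma axis_shift:
  fixes l :: "real \<Rightarrow> 'a::metric_space"
  assumes gl: "geodesic_line l" and iso: "\<And>x y. dist (g x) (g y) = dist x y"
    and inr: "\<And>t. g (l t) \<in> range l" and dl: "\<And>t. dist (l t) (g (l t)) = d" and dpos: "d > 0"
  shows "\<exists>\<sigma>. \<bar>\<sigma>\<bar> = d \<and> (\<forall>t. g (l t) = l (t + \<sigma>))"
proof -
  have pq: "g (l t) = l (t + d) \<or> g (l t) = l (t - d)" for t
  proof -
    obtain s where s: "g (l t) = l s" using inr[of t] by auto
    then have "\<bar>t - s\<bar> = d" using dl[of t] gl_dist[OF gl, of t s] by simp
    then have "s = t + d \<or> s = t - d" by auto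
    then show ?thesis using s by auto
  qed
  have excl: "\<not> (g (l t) = l (t + d) \<and> g (l t) = l (t - d))" for t
    using gl_inj[OF gl, of "t + d" "t - d"] dpos by auto
  have mix: "u = t + d" if "g (l t) = l (t + d)" "g (l u) = l (u - d)" for t u
  proof -
    have "\<bar>t - u\<bar> = dist (g (l t)) (g (l u))" using iso[of "l t" "l u"] gl_dist[OF gl, of t u] by simp
    also have "\<dots> = \<bar>t + d - (u - d)\<bar>" using that gl_dist[OF gl, of "t + d" "u - d"] by simp
    finally show ?thesis using dpos by (auto simp: abs_if split: if_splits)
  qed
  show ?thesis
  proof (cases "\<forall>t. g (l t) = l (t + d)")
    case True
    then show ?thesis using dpos by (intro exI[of _ d]) auto
  next
    case False
    then obtain u where u: "g (l u) \<noteq> l (u + d)" by auto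
    have "g (l t) = l (t - d)" for t
    proof (rule ccontr)
      assume nt: "g (l t) \<noteq> l (t - d)"
      then have Pt: "g (l t) = l (t + d)" using pq by auto
      have Qu: "g (l u) = l (u - d)" using pq u by auto
      have ut: "u = t + d" using mix[OF Pt Qu] .
      show False
      proof (cases "g (l (t + d/2)) = l (t + d/2 + d)")
        case True
        then have "u = t + d/2 + d" using mix[OF True Qu] by simp
        then show False using ut dpos by simp
      next
        case False
        have "g (l (t + d/2)) = l (t + d/2 + d) \<or> g (l (t + d/2)) = l (t + d/2 - d)" by (rule pq)
        then have "g (l (t + d/2)) = l (t + d/2 - d)" using False by auto
        have "t + d/2 = t + d" using mix[OF Pt, of "t + d/2"] \<open>g (l (t + d/2)) = l (t + d/2 - d)\<close> by simp
        then show False using dpos by simp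
      qed
    qed
    then show ?thesis using dpos by (intro exI[of _ "-d"]) auto
  qed
qed

lemma line_nearest:
  fixes l :: "real \<Rightarrow> 'a::metric_space"
  assumes gl: "geodesic_line l"
  shows "\<exists>s. \<forall>t. dist x (l s) \<le> dist x (l t)"
proof -
  define M where "M = 2 * dist x (l 0)"
  have "continuous_on {-M..M} (\<lambda>t. dist x (l t))"
    using gl_cont[OF gl] by (intro continuous_intros) auto
  moreover have "compact {-M..M}" by simp
  moreover have "{-M..M} \<noteq> {}" unfolding M_def by simp
  ultimately obtain s where s: "s \<in> {-M..M}" "\<And>t. t \<in> {-M..M} \<Longrightarrow> dist x (l s) \<le> dist x (l t)"
    using continuous_attains_inf by metis
  have "dist x (l s) \<le> dist x (l t)" for t
  proof (cases "t \<in> {-M..M}")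
    case True then show ?thesis using s by auto
  next
    case False
    have "\<bar>t\<bar> = dist (l t) (l 0)" using gl_dist[OF gl] by simp
    also have "\<dots> \<le> dist x (l t) + dist x (l 0)" by (metis dist_commute dist_triangle)
    finally have "dist x (l t) \<ge> dist x (l 0)" using False unfolding M_def by auto
    moreover have "0 \<in> {-M..M}" unfolding M_def by simp
    ultimately show ?thesis using s(2)[of 0] by simp
  qed
  then show ?thesis by blast
qed

locale cline =
  fixes l :: "real \<Rightarrow> 'a::metric_space" and K :: real
  assumes gl: "geodesic_line l" and Kpos: "K > 0"
    and contr: "\<And>x r. ball x r \<inter> range l = {} \<Longrightarrow> diameter (nearest_proj (range l) ` ball x r) \<le> K"
begin

definition "pr = nearest_proj (range l)"
definition "fd x = dist x (pr x)"

lemma pr_prop: "pr x \<in> range l \<and> (\<forall>q\<in>range l. dist x (pr x) \<le> dist x q)"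
proof -
  obtain s where s: "\<forall>t. dist x (l s) \<le> dist x (l t)" using line_nearest[OF gl] by blast
  have "\<exists>p. p \<in> range l \<and> (\<forall>q\<in>range l. dist x p \<le> dist x q)"
    using s by (intro exI[of _ "l s"]) auto
  then show ?thesis unfolding pr_def nearest_proj_def by (rule someI_ex)
qed

lemma pr_in: "pr x \<in> range l" using pr_prop by auto
lemma pr_le: "q \<in> range l \<Longrightarrow> fd x \<le> dist x q" using pr_prop unfolding fd_def by auto
lemma pr_le': "fd x \<le> dist x (l t)" using pr_le by auto
lemma fd_nonneg: "0 \<le> fd x" unfolding fd_def by simp

lemma fd_lip: "fd x \<le> fd y + dist x y"
proof -
  have "fd x \<le> dist x (pr y)" using pr_le pr_in by auto
  also have "\<dots> \<le> dist x y + fd y" unfolding fd_def by (rule dist_triangle)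
  finally show ?thesis by simp
qed

lemma fd_lip_abs: "\<bar>fd x - fd y\<bar> \<le> dist x y"
  using fd_lip[of x y] fd_lip[of y x] by (auto simp: dist_commute)

lemma fd_cont: "continuous_on S fd"
  by (rule lipschitz_on_continuous_on[of 1]) (auto intro!: lipschitz_onI simp: dist_real_def fd_lip_abs)

lemma proj_close:
  assumes "dist y z < fd y"
  shows "dist (pr y) (pr z) \<le> K"
proof -
  have disj: "ball y (fd y) \<inter> range l = {}"
  proof -
    { fix q assume "q \<in> ball y (fd y)" "q \<in> range l"
      then have False using pr_le[of q y] by simp }
    then show ?thesis by blast
  qed
  have sub: "pr ` ball y (fd y) \<subseteq> cball y (3 * fd y)"
  proof
    fix w assume "w \<in> pr ` ball y (fd y)"
    then obtain z' where z': "dist y z' < fd y" "w = pr z'" by auto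
    have "dist z' (pr z') \<le> dist z' (pr y)" using pr_le[of "pr y" z'] pr_in unfolding fd_def by auto
    also have "\<dots> \<le> dist z' y + fd y" unfolding fd_def by (rule dist_triangle)
    finally have "dist y w \<le> dist y z' + (dist z' y + fd y)" using z' dist_triangle[of y w z'] by (auto simp: dist_commute)
    then show "w \<in> cball y (3 * fd y)" using z' by (auto simp: dist_commute)
  qed
  have bd: "bounded (pr ` ball y (fd y))" using sub bounded_cball bounded_subset by blast
  have "0 < fd y" using assms zero_le_dist[of y z] by linarith
  then have "y \<in> ball y (fd y)" "z \<in> ball y (fd y)" using assms by auto
  then have "dist (pr y) (pr z) \<le> diameter (pr ` ball y (fd y))"
    by (intro diameter_bounded_bound[OF bd]) auto
  also have "\<dots> \<le> K" using contr[OF disj] unfolding pr_def .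
  finally show ?thesis .
qed

lemma chain:
  assumes ab: "a \<le> b" and lip: "\<And>s t. s \<in> {a..b} \<Longrightarrow> t \<in> {a..b} \<Longrightarrow> dist (\<gamma> s) (\<gamma> t) \<le> \<bar>s - t\<bar>"
    and r: "r > 0" and far: "\<And>s. a \<le> s \<Longrightarrow> s < b \<Longrightarrow> r \<le> fd (\<gamma> s)"
  shows "dist (pr (\<gamma> a)) (pr (\<gamma> b)) \<le> K * ((b - a) / r + 1)"
proof (cases "a = b")
  case True then show ?thesis using Kpos r by simp
next
  case False
  then have ab': "a < b" using ab by simp
  define n where "n = nat \<lfloor>(b - a) / r\<rfloor> + 1"
  define \<delta> where "\<delta> = (b - a) / n"
  have npos: "n > 0" unfolding n_def by simp
  have nle: "real n \<le> (b - a) / r + 1" unfolding n_def using ab' r by (simp add: of_nat_nat)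
  have ngt: "(b - a) / r < real n" unfolding n_def using ab' r
    by (simp add: of_nat_nat) linarith
  have dpos: "\<delta> > 0" unfolding \<delta>_def using ab' npos by simp
  have dr: "\<delta> < r" unfolding \<delta>_def using ngt npos r by (simp add: field_simps)
  have ndl: "real n * \<delta> = b - a" unfolding \<delta>_def using npos by simp
  have step: "i \<le> n \<Longrightarrow> dist (pr (\<gamma> a)) (pr (\<gamma> (a + real i * \<delta>))) \<le> real i * K" for i
  proof (induction i)
    case 0 then show ?case by simp
  next
    case (Suc i)
    have ilt: "real i < real n" using Suc by simp
    have "real i * \<delta> < real n * \<delta>" by (rule mult_strict_right_mono[OF ilt dpos])
    then have s1: "a + real i * \<delta> < b" using ndl by linarith
    have "real (Suc i) * \<delta> \<le> real n * \<delta>" using Suc.prems dpos by (intro mult_right_mono) auto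
    then have s2: "a + real (Suc i) * \<delta> \<le> b" using ndl by linarith
    have s0: "a \<le> a + real i * \<delta>" using dpos by simp
    have "dist (\<gamma> (a + real i * \<delta>)) (\<gamma> (a + real (Suc i) * \<delta>)) \<le> \<delta>"
      using lip[of "a + real i * \<delta>" "a + real (Suc i) * \<delta>"] s1 s2 s0 dpos by (simp add: algebra_simps)
    also have "\<dots> < fd (\<gamma> (a + real i * \<delta>))" using far[OF s0 s1] dr by simp
    finally have "dist (pr (\<gamma> (a + real i * \<delta>))) (pr (\<gamma> (a + real (Suc i) * \<delta>))) \<le> K"
      by (rule proj_close)
    then show ?case using Suc dist_triangle[of "pr (\<gamma> a)" "pr (\<gamma> (a + real (Suc i) * \<delta>))" "pr (\<gamma> (a + real i * \<delta>))"]
      by (simp add: algebra_simps)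
  qed
  have "dist (pr (\<gamma> a)) (pr (\<gamma> b)) \<le> real n * K" using step[of n] ndl by simp
  also have "\<dots> \<le> K * ((b - a) / r + 1)" using nle Kpos by (simp add: mult.commute)
  finally show ?thesis .
qed

end


lemma gseg_dist: "geodesic_seg c x y \<Longrightarrow> s \<in> {0..dist x y} \<Longrightarrow> t \<in> {0..dist x y} \<Longrightarrow> dist (c s) (c t) = \<bar>s - t\<bar>"
  unfolding geodesic_seg_def by auto

lemma gseg_ends: "geodesic_seg c x y \<Longrightarrow> c 0 = x \<and> c (dist x y) = y"
  unfolding geodesic_seg_def by auto

lemma gspace_seg: "geodesic_space TYPE('a::metric_space) \<Longrightarrow> \<exists>c. geodesic_seg c (x::'a) y"
  unfolding geodesic_space_def by auto

lemma dist_triangle4: "dist a d \<le> dist a b + dist b c + dist c d"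
  using dist_triangle[of a d b] dist_triangle[of b d c] by linarith

context cline
begin

lemma fdL_cont: assumes "geodesic_line L" shows "continuous_on UNIV (\<lambda>s. fd (L s))"
proof -
  have "continuous_on UNIV L" using gl_cont[OF assms] .
  from continuous_on_compose[OF this fd_cont] show ?thesis by (simp add: o_def)
qed

lemma forward_exit:
  assumes L: "geodesic_line L" and C: "\<And>t. fd (L t) \<le> C" and far: "fd (L t0) > 2 * K"
  shows "\<exists>v\<ge>t0. fd (L v) \<le> 2 * K \<and> (\<forall>s. t0 \<le> s \<and> s < v \<longrightarrow> fd (L s) > 2 * K)"
proof -
  define T where "T = 4 * C + 4 * K + 1"
  have C0: "C \<ge> 0" using C[of 0] fd_nonneg[of "L 0"] by linarith
  have Tpos: "T > 0" unfolding T_def using C0 Kpos by simp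
  have ex: "\<exists>s\<in>{t0..t0+T}. fd (L s) \<le> 2 * K"
  proof (rule ccontr)
    assume "\<not> ?thesis"
    then have allfar: "\<And>s. s \<in> {t0..t0+T} \<Longrightarrow> fd (L s) > 2 * K" by (auto simp: not_le)
    have "dist (pr (L t0)) (pr (L (t0 + T))) \<le> K * ((t0 + T - t0) / (2 * K) + 1)"
      by (rule chain) (use Tpos Kpos allfar gl_dist[OF L] in \<open>auto simp: less_imp_le\<close>)
    also have "\<dots> = T / 2 + K" using Kpos by (simp add: field_simps)
    finally have pp: "dist (pr (L t0)) (pr (L (t0 + T))) \<le> T / 2 + K" .
    have "T = dist (L t0) (L (t0 + T))" using gl_dist[OF L] Tpos by simp
    also have "\<dots> \<le> dist (L t0) (pr (L t0)) + dist (pr (L t0)) (pr (L (t0 + T))) + dist (pr (L (t0 + T))) (L (t0 + T))"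
      by (rule dist_triangle4)
    also have "\<dots> \<le> C + (T / 2 + K) + C" using C[of t0] C[of "t0 + T"] pp unfolding fd_def by (simp add: dist_commute)
    finally show False unfolding T_def using Kpos by simp
  qed
  define S where "S = {t0..t0+T} \<inter> {s. fd (L s) \<le> 2 * K}"
  have "closed {s. fd (L s) \<le> 2 * K}"
    using closed_Collect_le[OF fdL_cont[OF L] continuous_on_const] by simp
  then have "compact S" unfolding S_def by (intro compact_Int_closed) auto
  moreover have "S \<noteq> {}" using ex unfolding S_def by auto
  ultimately obtain v where v: "v \<in> S" "\<And>y. y \<in> S \<Longrightarrow> v \<le> y"
    using compact_attains_inf by metis
  show ?thesis
  proof (intro exI[of _ v] conjI allI impI)
    show "t0 \<le> v" "fd (L v) \<le> 2 * K" using v(1) unfolding S_def by auto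
    fix s assume s: "t0 \<le> s \<and> s < v"
    then have "s \<in> {t0..t0+T}" using v(1) unfolding S_def by auto
    then show "fd (L s) > 2 * K" using v(2)[of s] s unfolding S_def by force
  qed
qed

lemma near_line:
  assumes L: "geodesic_line L" and C: "\<And>t. dist (L t) (l t) \<le> C"
  shows "fd (L t0) \<le> 14 * K"
proof (cases "fd (L t0) \<le> 2 * K")
  case True then show ?thesis using Kpos by simp
next
  case False
  then have far: "fd (L t0) > 2 * K" by simp
  have C': "fd (L t) \<le> C" for t using pr_le'[of "L t" t] C[of t] by simp
  obtain v where v: "v \<ge> t0" "fd (L v) \<le> 2 * K" "\<And>s. t0 \<le> s \<Longrightarrow> s < v \<Longrightarrow> fd (L s) > 2 * K"
    using forward_exit[OF L C' far] by blast
  have L': "geodesic_line (\<lambda>t. L (- t))" using gl_rev[OF L] .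
  obtain v' where v': "v' \<ge> - t0" "fd (L (- v')) \<le> 2 * K" "\<And>s. - t0 \<le> s \<Longrightarrow> s < v' \<Longrightarrow> fd (L (- s)) > 2 * K"
    using forward_exit[OF L', of C "- t0"] C' far by auto
  define u where "u = - v'"
  have u: "u \<le> t0" "fd (L u) \<le> 2 * K" using v' unfolding u_def by auto
  have c1: "dist (pr (L t0)) (pr (L v)) \<le> K * ((v - t0) / (2 * K) + 1)"
    by (rule chain) (use v Kpos gl_dist[OF L] in \<open>auto simp: less_imp_le\<close>)
  have c2: "dist (pr (L (- (- t0)))) (pr (L (- v'))) \<le> K * ((v' - - t0) / (2 * K) + 1)"
    by (rule chain[where \<gamma>="\<lambda>t. L (- t)"]) (use v' Kpos gl_dist[OF L'] in \<open>auto simp: less_imp_le\<close>)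
  have c2': "dist (pr (L t0)) (pr (L u)) \<le> K * ((t0 - u) / (2 * K) + 1)"
    using c2 unfolding u_def by (simp add: add.commute)
  have "dist (pr (L u)) (pr (L v)) \<le> K * ((t0 - u) / (2 * K) + 1) + K * ((v - t0) / (2 * K) + 1)"
    using c1 c2' dist_triangle[of "pr (L u)" "pr (L v)" "pr (L t0)"] by (simp add: dist_commute)
  also have "\<dots> = (v - u) / 2 + 2 * K" using Kpos by (simp add: field_simps)
  finally have pp: "dist (pr (L u)) (pr (L v)) \<le> (v - u) / 2 + 2 * K" .
  have "v - u = dist (L u) (L v)" using gl_dist[OF L] u v by simp
  also have "\<dots> \<le> dist (L u) (pr (L u)) + dist (pr (L u)) (pr (L v)) + dist (pr (L v)) (L v)"
    by (rule dist_triangle4)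
  also have "\<dots> \<le> 2 * K + ((v - u) / 2 + 2 * K) + 2 * K" using u v pp unfolding fd_def by (simp add: dist_commute)
  finally have vu: "v - u \<le> 12 * K" by (simp add: field_simps)
  have "fd (L t0) \<le> fd (L v) + dist (L t0) (L v)" by (rule fd_lip)
  also have "\<dots> \<le> 2 * K + (v - t0)" using v gl_dist[OF L] by simp
  finally show ?thesis using vu u by simp
qed

end


context cline
begin

lemma nearest_close:
  assumes gs: "geodesic_space TYPE('a)" and q: "q \<in> range l" and dq: "dist y q = fd y" and pos: "fd y > 0"
  shows "dist (pr y) q \<le> K"
proof (rule field_le_epsilon)
  fix e :: real assume e: "e > 0"
  obtain \<gamma> where g: "geodesic_seg \<gamma> y q" using gspace_seg[OF gs] by blast
  define R where "R = fd y"
  define \<delta> where "\<delta> = min (e/2) (R/2)"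
  have dpos: "\<delta> > 0" "\<delta> < R" "\<delta> \<le> e/2" unfolding \<delta>_def R_def using e pos by auto
  have dR: "dist y q = R" using dq R_def by simp
  have ends: "\<gamma> 0 = y" "\<gamma> R = q" using gseg_ends[OF g] dR by auto
  have d1: "dist y (\<gamma> (R - \<delta>)) = R - \<delta>"
    using gseg_dist[OF g, of 0 "R - \<delta>"] ends dpos dR by simp
  have d2: "dist (\<gamma> (R - \<delta>)) q = \<delta>"
    using gseg_dist[OF g, of "R - \<delta>" R] ends dpos dR by simp
  have "dist y (\<gamma> (R - \<delta>)) < fd y" using d1 dpos R_def by simp
  then have pc: "dist (pr y) (pr (\<gamma> (R - \<delta>))) \<le> K" by (rule proj_close)
  have "fd (\<gamma> (R - \<delta>)) \<le> \<delta>" using pr_le[OF q, of "\<gamma> (R - \<delta>)"] d2 by simp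
  then have "dist (pr (\<gamma> (R - \<delta>))) q \<le> 2 * \<delta>"
    using dist_triangle[of "pr (\<gamma> (R - \<delta>))" q "\<gamma> (R - \<delta>)"] d2 unfolding fd_def by (simp add: dist_commute)
  then show "dist (pr y) q \<le> K + e"
    using pc dist_triangle[of "pr y" q "pr (\<gamma> (R - \<delta>))"] dpos by linarith
qed

lemma near_min:
  assumes gs: "geodesic_space TYPE('a)" and iso: "\<And>x y. dist (h x) (h y) = dist x y"
    and sh: "\<And>t. h (l t) = l (t + c)" and cbig: "c > 4 * K + 1" and dx: "dist x (h x) \<le> c + 1"
  shows "fd x \<le> (c + 1) / 2 + 2 * K"
proof (cases "fd x \<le> 2 * K")
  case True then show ?thesis using cbig Kpos by argo
next
  case False
  then have far: "fd x > 2 * K" by simp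
  obtain s where s: "pr x = l s" using pr_in[of x] by auto
  obtain s' where s': "pr (h x) = l s'" using pr_in[of "h x"] by auto
  have f1: "fd (h x) \<le> fd x"
  proof -
    have "fd (h x) \<le> dist (h x) (h (l s))" using pr_le'[of "h x" "s + c"] sh[of s] by simp
    also have "\<dots> = fd x" using iso s unfolding fd_def by simp
    finally show ?thesis .
  qed
  have f2: "fd x \<le> fd (h x)"
  proof -
    have "fd x \<le> dist x (l (s' - c))" by (rule pr_le')
    also have "\<dots> = dist (h x) (h (l (s' - c)))" using iso by simp
    also have "\<dots> = fd (h x)" using sh[of "s' - c"] s' unfolding fd_def by simp
    finally show ?thesis .
  qed
  have feq: "fd (h x) = fd x" using f1 f2 by simp
  have hn: "dist (h x) (h (l s)) = fd (h x)" using iso s feq unfolding fd_def by simp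
  have "dist (pr (h x)) (h (l s)) \<le> K"
    by (rule nearest_close[OF gs _ hn]) (use sh[of s] far Kpos feq in auto)
  moreover have "dist (pr x) (h (l s)) = c"
    using s sh[of s] gl_dist[OF gl, of s "s + c"] cbig Kpos by simp
  ultimately have lowb: "dist (pr x) (pr (h x)) \<ge> c - K"
    using dist_triangle[of "pr x" "h (l s)" "pr (h x)"] by (simp add: dist_commute)
  obtain \<gamma> where g: "geodesic_seg \<gamma> x (h x)" using gspace_seg[OF gs] by blast
  define D where "D = dist x (h x)"
  have ends: "\<gamma> 0 = x" "\<gamma> D = h x" using gseg_ends[OF g] D_def by auto
  show ?thesis
  proof (cases "\<forall>s. 0 \<le> s \<and> s < D \<longrightarrow> 2 * K \<le> fd (\<gamma> s)")
    case True
    have "dist (pr (\<gamma> 0)) (pr (\<gamma> D)) \<le> K * ((D - 0) / (2 * K) + 1)"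
      by (rule chain) (use True Kpos gseg_dist[OF g] D_def in auto)
    also have "\<dots> = D / 2 + K" using Kpos by (simp add: field_simps)
    finally have "c - K \<le> D / 2 + K" using lowb ends by simp
    then have False using dx cbig unfolding D_def by (simp add: field_simps)
    then show ?thesis ..
  next
    case False
    then obtain t where t: "0 \<le> t" "t < D" "fd (\<gamma> t) < 2 * K" by (auto simp: not_le)
    have dt1: "dist x (\<gamma> t) = t" using gseg_dist[OF g, of 0 t] ends t D_def by simp
    have dt2: "dist (\<gamma> t) (h x) = D - t" using gseg_dist[OF g, of t D] ends t D_def by simp
    have "fd x \<le> fd (\<gamma> t) + t" using fd_lip[of x "\<gamma> t"] dt1 by simp
    moreover have "fd (h x) \<le> fd (\<gamma> t) + (D - t)" using fd_lip[of "h x" "\<gamma> t"] dt2 by (simp add: dist_commute)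
    ultimately have "2 * fd x \<le> 4 * K + D" using feq t by simp
    then show ?thesis using dx unfolding D_def by (simp add: field_simps)
  qed
qed

end


lemma comp_tri:
  fixes A B C :: real
  assumes "A \<ge> 0" "B \<ge> 0" "C \<ge> 0" "A \<le> B + C" "B \<le> A + C" "C \<le> A + B"
  shows "\<exists>x' y' z' :: complex. dist x' y' = A \<and> dist y' z' = B \<and> dist z' x' = C"
proof (cases "A = 0")
  case True
  then have "B = C" using assms by simp
  then show ?thesis using True assms
    by (intro exI[of _ 0] exI[of _ "complex_of_real C"]) (simp add: dist_norm)
next
  case False
  then have Ap: "A > 0" using assms by simp
  define u where "u = (A^2 + C^2 - B^2) / (2 * A)"
  define v where "v = sqrt (C^2 - u^2)"
  have h1: "A^2 + C^2 - B^2 \<le> 2 * A * C"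
  proof -
    have "\<bar>A - C\<bar> \<le> B" using assms by simp
    then have "(A - C)^2 \<le> B^2" using assms
      by (metis abs_le_square_iff abs_of_nonneg)
    then show ?thesis by (simp add: power2_eq_square algebra_simps)
  qed
  have h2: "- (A^2 + C^2 - B^2) \<le> 2 * A * C"
  proof -
    have "B \<le> A + C" using assms by simp
    then have "B^2 \<le> (A + C)^2" using assms by (intro power_mono) auto
    then show ?thesis by (simp add: power2_eq_square algebra_simps)
  qed
  have "\<bar>u\<bar> \<le> C" unfolding u_def using h1 h2 Ap
    by (simp add: abs_le_iff field_simps) 
  then have uC: "u^2 \<le> C^2" using assms by (metis abs_le_square_iff abs_of_nonneg)
  have v2: "v^2 = C^2 - u^2" unfolding v_def using uC by simp
  have au: "2 * A * u = A^2 + C^2 - B^2" unfolding u_def using Ap by simp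
  have d1: "dist (Complex u v) 0 = C"
    using v2 assms by (simp add: dist_norm complex_norm)
  have d2: "dist (complex_of_real A) (Complex u v) = B"
  proof -
    have "complex_of_real A - Complex u v = Complex (A - u) (- v)" by (simp add: complex_eq_iff)
    then have "dist (complex_of_real A) (Complex u v) = sqrt ((A - u)^2 + v^2)"
      by (simp add: dist_norm complex_norm)
    also have "(A - u)^2 + v^2 = B^2" using v2 au by (simp add: power2_eq_square algebra_simps)
    finally show ?thesis using assms by simp
  qed
  show ?thesis using d1 d2 Ap
    by (intro exI[of _ 0] exI[of _ "complex_of_real A"] exI[of _ "Complex u v"]) (simp add: dist_norm)
qed

lemma cat0_mid:
  assumes cat: "CAT0 TYPE('a::metric_space)" and g1: "geodesic_seg c1 x y" and g2: "geodesic_seg c2 y (z::'a)"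
  shows "dist (c1 (dist x y / 2)) (c2 (dist y z / 2)) \<le> dist z x / 2"
proof -
  have gs: "geodesic_space TYPE('a)" using cat unfolding CAT0_def by simp
  obtain c3 where g3: "geodesic_seg c3 z x" using gs unfolding geodesic_space_def by blast
  obtain x' y' z' :: complex where ct: "dist x' y' = dist x y" "dist y' z' = dist y z" "dist z' x' = dist z x"
    using comp_tri[of "dist x y" "dist y z" "dist z x"] dist_triangle[of x y z] dist_triangle[of y z x] dist_triangle[of z x y]
    by (auto simp: dist_commute)
  have H: "\<forall>(x::'a) y z c1 c2 c3. geodesic_seg c1 x y \<and> geodesic_seg c2 y z \<and> geodesic_seg c3 z x \<longrightarrow>
      (\<forall>x' y' z' :: complex.
         dist x' y' = dist x y \<and> dist y' z' = dist y z \<and> dist z' x' = dist z x \<longrightarrow>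
         (\<forall>(c, u, v, l)\<in>set [(c1, x', y', dist x y), (c2, y', z', dist y z), (c3, z', x', dist z x)]. \<forall>(c', u', v', l')\<in>set [(c1, x', y', dist x y), (c2, y', z', dist y z), (c3, z', x', dist z x)].
            \<forall>s\<in>{0..l}. \<forall>t\<in>{0..l'}.
              dist (c s) (c' t) \<le> dist (u + of_real (s / l) * (v - u)) (u' + of_real (t / l') * (v' - u'))))"
    using cat unfolding CAT0_def Let_def by (elim conjE) assumption
  let ?L = "[(c1, x', y', dist x y), (c2, y', z', dist y z), (c3, z', x', dist z x)]"
  have R: "\<forall>(c, u, v, l)\<in>set ?L. \<forall>(c', u', v', l')\<in>set ?L.
            \<forall>s\<in>{0..l}. \<forall>t\<in>{0..l'}.
              dist (c s) (c' t) \<le> dist (u + of_real (s / l) * (v - u)) (u' + of_real (t / l') * (v' - u'))"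
  proof -
    note H1 = spec[OF spec[OF spec[OF spec[OF spec[OF spec[OF H, of x], of y], of z], of c1], of c2], of c3]
    note H2 = mp[OF H1 conjI[OF g1 conjI[OF g2 g3]]]
    note H3 = spec[OF spec[OF spec[OF H2, of x'], of y'], of z']
    show ?thesis by (rule mp[OF H3 conjI[OF ct(1) conjI[OF ct(2) ct(3)]]])
  qed
  have m1: "(c1, x', y', dist x y) \<in> set ?L" by simp
  have m2: "(c2, y', z', dist y z) \<in> set ?L" by simp
  have R1: "\<forall>(c', u', v', l')\<in>set ?L. \<forall>s\<in>{0..dist x y}. \<forall>t\<in>{0..l'}.
              dist (c1 s) (c' t) \<le> dist (x' + of_real (s / dist x y) * (y' - x')) (u' + of_real (t / l') * (v' - u'))"
    using bspec[OF R m1] by (simp only: prod.case)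
  have R2: "\<forall>s\<in>{0..dist x y}. \<forall>t\<in>{0..dist y z}.
              dist (c1 s) (c2 t) \<le> dist (x' + of_real (s / dist x y) * (y' - x')) (y' + of_real (t / dist y z) * (z' - y'))"
    using bspec[OF R1 m2] by (simp only: prod.case)
  have "dist (c1 (dist x y / 2)) (c2 (dist y z / 2))
     \<le> dist (x' + of_real ((dist x y / 2) / dist x y) * (y' - x')) (y' + of_real ((dist y z / 2) / dist y z) * (z' - y'))"
    by (rule R2[rule_format]) auto
  also have "x' + of_real ((dist x y / 2) / dist x y) * (y' - x') = x' + of_real (1/2) * (y' - x')"
  proof (cases "dist x y = 0")
    case True then have "y' = x'" using ct by simp
    then show ?thesis by simp
  qed simp
  also have "y' + of_real ((dist y z / 2) / dist y z) * (z' - y') = y' + of_real (1/2) * (z' - y')"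
  proof (cases "dist y z = 0")
    case True then have "z' = y'" using ct by simp
    then show ?thesis by simp
  qed simp
  also have "dist (x' + of_real (1/2) * (y' - x')) (y' + of_real (1/2) * (z' - y')) = dist x' z' / 2"
  proof -
    have "(x' + of_real (1/2) * (y' - x')) - (y' + of_real (1/2) * (z' - y')) = (x' - z') / 2"
      by (simp add: field_simps)
    then have "dist (x' + of_real (1/2) * (y' - x')) (y' + of_real (1/2) * (z' - y')) = norm ((x' - z') / 2)"
      unfolding dist_norm by metis
    also have "\<dots> = dist x' z' / 2" by (simp add: dist_norm norm_divide)
    finally show ?thesis .
  qed
  finally show ?thesis using ct by (simp add: dist_commute)
qed

lemma gseg_comp:
  assumes "geodesic_seg c x y" "isometry g"
  shows "geodesic_seg (g \<circ> c) (g x) (g y)"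
  using assms unfolding geodesic_seg_def by (auto simp: isometry_dist)

lemma tl_half:
  assumes cat: "CAT0 TYPE('a::metric_space)" and iso: "isometry (g::'a \<Rightarrow> 'a)"
  shows "translation_length g \<le> dist y (g (g y)) / 2"
proof -
  have gs: "geodesic_space TYPE('a)" using cat unfolding CAT0_def by simp
  obtain c where c: "geodesic_seg c y (g y)" using gs unfolding geodesic_space_def by blast
  have c2: "geodesic_seg (g \<circ> c) (g y) (g (g y))" by (rule gseg_comp[OF c iso])
  have "dist (c (dist y (g y) / 2)) ((g \<circ> c) (dist (g y) (g (g y)) / 2)) \<le> dist (g (g y)) y / 2"
    by (rule cat0_mid[OF cat c c2])
  moreover have "dist (g y) (g (g y)) = dist y (g y)" using isometry_dist[OF iso] by simp
  ultimately have "dist (c (dist y (g y) / 2)) (g (c (dist y (g y) / 2))) \<le> dist y (g (g y)) / 2"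
    by (simp add: dist_commute)
  then show ?thesis using tl_le[of g "c (dist y (g y) / 2)"] by simp
qed


lemma lim_nat:
  fixes c a b :: real
  assumes "\<And>M::nat. M > 0 \<Longrightarrow> c \<le> a + b / real M" "b \<ge> 0"
  shows "c \<le> a"
proof (rule ccontr)
  assume "\<not> c \<le> a"
  then have ca: "c - a > 0" by simp
  obtain M :: nat where M: "b / (c - a) < real M" using reals_Archimedean2 by blast
  have Mp: "M > 0" using M ca assms(2) by (metis divide_nonneg_pos not_gr0 not_le of_nat_0)
  have "b < real M * (c - a)" using M ca by (simp add: field_simps)
  then have "b / real M < c - a" using Mp by (simp add: field_simps)
  then show False using assms(1)[OF Mp] by simp
qed

lemma lim_pow2:
  fixes c a b :: real
  assumes "\<And>k::nat. c \<le> a + b / 2 ^ k" "b \<ge> 0"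
  shows "c \<le> a"
proof (rule lim_nat[OF _ assms(2)])
  fix M :: nat assume M: "M > 0"
  have "real M \<le> 2 ^ M" using less_exp[of M] by (metis less_imp_le of_nat_less_numeral_power_cancel_iff of_nat_numeral)
  then have "b / 2 ^ M \<le> b / real M" using M assms(2) by (intro divide_left_mono) auto
  then show "c \<le> a + b / real M" using assms(1)[of M] by simp
qed

locale pact =
  fixes G :: "('g, 'm) monoid_scheme" and \<rho> :: "'g \<Rightarrow> 'a::metric_space \<Rightarrow> 'a" and \<beta> :: 'g
  assumes grp: "group G" and act: "isom_action G \<rho>" and bc: "\<beta> \<in> carrier G"
begin

definition E :: "int \<Rightarrow> 'a \<Rightarrow> 'a" where "E z = \<rho> (\<beta> [^]\<^bsub>G\<^esub> z)"

lemma E_add: "E (z + w) x = E z (E w x)"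
  unfolding E_def by (rule act_pow_add[OF grp act bc])

lemma E_iso: "isometry (E z)"
  unfolding E_def by (rule act_pow_isom[OF grp act bc])

lemma E_dist: "dist (E z x) (E z y) = dist x y"
  using isometry_dist[OF E_iso] .

lemma E_0: "E 0 x = x"
  unfolding E_def by (rule act_pow_zero[OF grp act bc])

lemma E_1: "E 1 = \<rho> \<beta>"
proof -
  interpret group G by (rule grp)
  show ?thesis unfolding E_def using bc by simp
qed

lemma E_comm: "E z (E w x) = E w (E z x)"
  using E_add[of z w x] E_add[of w z x] by (simp add: add.commute)

lemma E_shift:
  assumes "\<And>t. E p (l t) = l (t + c)"
  shows "E (z * p) (l t) = l (t + real_of_int z * c)"
  using act_shift_int[OF grp act bc, of p l c z t] assms unfolding E_def by simp

lemma E_dist_le: "dist y (E (int n * p) y) \<le> real n * dist y (E p y)"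
  using dist_pow_le[OF grp act bc] unfolding E_def by simp

lemma E_dist_diff: "dist (E a x) (E b x) = dist x (E (b - a) x)"
proof -
  have "E b x = E a (E (b - a) x)" using E_add[of a "b - a" x] by simp
  moreover have "E a x = E a (E 0 x)" using E_0 by simp
  ultimately show ?thesis using E_dist E_0 by simp
qed

lemma E_cont: "continuous_on S (E z)"
  by (rule lipschitz_on_continuous_on[of 1]) (auto intro!: lipschitz_onI simp: E_dist)

lemma lower_bound:
  fixes l :: "real \<Rightarrow> 'a"
  assumes gl: "geodesic_line l" and sh: "\<And>t. E p (l t) = l (t + c)" and c: "c \<ge> 0"
  shows "c \<le> dist y (E p y)"
proof (rule lim_nat)
  fix M :: nat assume M: "M > 0"
  define D where "D = dist y (l 0)"
  have "real M * c = dist (l 0) (E (int M * p) (l 0))"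
    using E_shift[where p=p and l=l and c=c and z="int M" and t=0, OF sh] gl_dist[OF gl] c by simp
  also have "\<dots> \<le> dist (l 0) y + dist y (E (int M * p) y) + dist (E (int M * p) y) (E (int M * p) (l 0))"
    using dist_triangle[of "l 0" "E (int M * p) (l 0)" y] dist_triangle[of y "E (int M * p) (l 0)" "E (int M * p) y"] by linarith
  also have "\<dots> \<le> 2 * D + real M * dist y (E p y)"
    using E_dist_le[of y M p] E_dist[of "int M * p" y "l 0"] unfolding D_def by (simp add: dist_commute)
  finally have "real M * c \<le> 2 * D + real M * dist y (E p y)" .
  then show "c \<le> dist y (E p y) + 2 * D / real M" using M by (simp add: field_simps)
next
  show "0 \<le> 2 * dist y (l 0)" by simp
qed

lemma upper_bound:
  fixes l :: "real \<Rightarrow> 'a"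
  assumes cat: "CAT0 TYPE('a)" and gl: "geodesic_line l" and sh: "\<And>t. E (int p) (l t) = l (t + c)"
    and c: "c \<ge> 0" and p: "p > 0"
  shows "translation_length (E 1) \<le> c / p"
proof -
  have half: "translation_length (E (2 ^ k)) \<le> translation_length (E (2 ^ Suc k)) / 2" for k :: nat
  proof -
    have "2 * translation_length (E (2 ^ k)) \<le> dist y (E (2 ^ Suc k) y)" for y
    proof -
      have "E (2 ^ Suc k) y = E (2 ^ k) (E (2 ^ k) y)" using E_add[of "2 ^ k" "2 ^ k" y] by simp
      then show ?thesis using tl_half[OF cat E_iso, of "2 ^ k" y] by simp
    qed
    then have "2 * translation_length (E (2 ^ k)) \<le> translation_length (E (2 ^ Suc k))" by (rule tl_ge)
    then show ?thesis by simp
  qed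
  have iter: "translation_length (E 1) \<le> translation_length (E (2 ^ k)) / 2 ^ k" for k :: nat
  proof (induction k)
    case 0 then show ?case by simp
  next
    case (Suc k)
    have "translation_length (E 1) \<le> translation_length (E (2 ^ k)) / 2 ^ k" by (rule Suc)
    also have "\<dots> \<le> (translation_length (E (2 ^ Suc k)) / 2) / 2 ^ k"
      using half[of k] by (intro divide_right_mono) auto
    finally show ?case by (simp add: field_simps)
  qed
  define y0 where "y0 = l 0"
  define F1 where "F1 = dist y0 (E 1 y0)"
  have bound: "dist y0 (E (int N) y0) \<le> real N / real p * c + real p * F1" for N :: nat
  proof -
    define q where "q = N div p"
    define r where "r = N mod p"
    have Nqr: "int N = int q * int p + int r" unfolding q_def r_def by (simp flip: of_nat_mult of_nat_add)
    have rp: "r < p" unfolding r_def using p by simp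
    have "dist y0 (E (int N) y0) \<le> dist y0 (E (int q * int p) y0) + dist (E (int q * int p) y0) (E (int N) y0)"
      by (rule dist_triangle)
    also have "dist y0 (E (int q * int p) y0) = real q * c"
      using E_shift[where p="int p" and l=l and c=c and z="int q" and t=0, OF sh] gl_dist[OF gl] c unfolding y0_def by simp
    also have "dist (E (int q * int p) y0) (E (int N) y0) = dist y0 (E (int r) y0)"
      unfolding E_dist_diff Nqr by simp
    also have "dist y0 (E (int r) y0) \<le> real r * F1" using E_dist_le[of y0 r 1] unfolding F1_def by simp
    also have "real r * F1 \<le> real p * F1" using rp unfolding F1_def by (intro mult_right_mono) auto
    also have "real q * c \<le> real N / real p * c"
    proof -
      have "q * p \<le> N" unfolding q_def by (rule div_times_less_eq_dividend)
      then have "real q * real p \<le> real N" by (metis of_nat_le_iff of_nat_mult)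
      then have "real q \<le> real N / real p" using p by (simp add: field_simps)
      then show ?thesis using c by (intro mult_right_mono) auto
    qed
    finally show ?thesis by simp
  qed
  show ?thesis
  proof (rule lim_pow2)
    fix k :: nat
    have "translation_length (E 1) \<le> translation_length (E (2 ^ k)) / 2 ^ k" by (rule iter)
    also have "translation_length (E (2 ^ k)) \<le> dist y0 (E (int (2 ^ k)) y0)" using tl_le by simp
    also have "\<dots> \<le> real (2 ^ k) / real p * c + real p * F1" by (rule bound)
    finally show "translation_length (E 1) \<le> c / real p + real p * F1 / 2 ^ k"
      by (simp add: field_simps)
  next
    show "0 \<le> real p * F1" unfolding F1_def by simp
  qed
qed

end


context pact
begin

lemma axis_build:
  assumes lp: "w > 0" and c0: "geodesic_seg c0 x (E 1 x)" and d1: "dist x (E 1 x) = w"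
    and dN: "\<And>N::nat. dist x (E (int N) x) = real N * w"
  shows "geodesic_line (\<lambda>t. E \<lfloor>t/w\<rfloor> (c0 (t - of_int \<lfloor>t/w\<rfloor> * w))) \<and>
         (\<forall>t. E 1 (E \<lfloor>t/w\<rfloor> (c0 (t - of_int \<lfloor>t/w\<rfloor> * w))) = E \<lfloor>(t + w)/w\<rfloor> (c0 (t + w - of_int \<lfloor>(t + w)/w\<rfloor> * w)))"
proof -
  define L where "L = (\<lambda>t. E \<lfloor>t/w\<rfloor> (c0 (t - of_int \<lfloor>t/w\<rfloor> * w)))"
  define fl where "fl t = \<lfloor>t/w\<rfloor>" for t
  define fr where "fr t = t - of_int (fl t) * w" for t
  have Lt: "L t = E (fl t) (c0 (fr t))" for t unfolding L_def fl_def fr_def by simp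
  have fr_bd: "0 \<le> fr t" "fr t < w" for t
  proof -
    have "of_int (fl t) \<le> t / w" "t / w < of_int (fl t) + 1" unfolding fl_def by linarith+
    then have "of_int (fl t) * w \<le> t" "t < (of_int (fl t) + 1) * w" using lp by (simp_all add: field_simps)
    then show "0 \<le> fr t" "fr t < w" unfolding fr_def by (simp_all add: algebra_simps)
  qed
  have tdec: "t = of_int (fl t) * w + fr t" for t unfolding fr_def by simp
  have ends: "c0 0 = x" "c0 w = E 1 x" using gseg_ends[OF c0] d1 by auto
  have cd: "a \<in> {0..w} \<Longrightarrow> b \<in> {0..w} \<Longrightarrow> dist (c0 a) (c0 b) = \<bar>a - b\<bar>" for a b
    using gseg_dist[OF c0] d1 by simp
  have dZ: "a \<le> b \<Longrightarrow> dist (E a x) (E b x) = of_int (b - a) * w" for a b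
  proof -
    assume "a \<le> b"
    then have "b - a = int (nat (b - a))" by simp
    then show ?thesis using E_dist_diff[of a x b] dN[of "nat (b - a)"] by (metis of_int_of_nat_eq)
  qed
  have dA: "dist (L t) (E (fl t) x) = fr t" for t
    using Lt[of t] E_dist[of "fl t" "c0 (fr t)" "c0 0"] ends cd[of "fr t" 0] fr_bd[of t] lp by simp
  have dB: "dist (L t) (E (fl t + 1) x) = w - fr t" for t
  proof -
    have "E (fl t + 1) x = E (fl t) (c0 w)" using E_add[of "fl t" 1 x] ends by simp
    then show ?thesis using Lt[of t] E_dist[of "fl t" "c0 (fr t)" "c0 w"] cd[of "fr t" w] fr_bd[of t] lp by simp
  qed
  have main: "s \<le> t \<Longrightarrow> dist (L s) (L t) = t - s" for s t
  proof -
    assume st: "s \<le> t"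
    have fle: "fl s \<le> fl t" unfolding fl_def using st lp by (intro floor_mono) (simp add: divide_right_mono)
    show ?thesis
    proof (cases "fl s = fl t")
      case True
      then have "dist (L s) (L t) = \<bar>fr s - fr t\<bar>"
        using Lt[of s] Lt[of t] E_dist[of "fl t"] cd[of "fr s" "fr t"] fr_bd[of s] fr_bd[of t] by simp
      also have "fr s - fr t = s - t" unfolding fr_def using True by simp
      finally show ?thesis using st by simp
    next
      case False
      then have flt: "fl s + 1 \<le> fl t" using fle by simp
      have "dist (L s) (L t) \<le> dist (L s) (E (fl s + 1) x) + dist (E (fl s + 1) x) (E (fl t) x) + dist (E (fl t) x) (L t)"
        by (rule dist_triangle4)
      also have "\<dots> = (w - fr s) + of_int (fl t - fl s - 1) * w + fr t"
        using dB[of s] dZ[OF flt] dA[of t] by (simp add: dist_commute)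
      also have "\<dots> = t - s" using tdec[of s] tdec[of t] by (simp add: algebra_simps)
      finally have up: "dist (L s) (L t) \<le> t - s" .
      have "of_int (fl t + 1 - fl s) * w = dist (E (fl s) x) (E (fl t + 1) x)" using dZ[of "fl s" "fl t + 1"] fle by simp
      also have "\<dots> \<le> dist (E (fl s) x) (L s) + dist (L s) (L t) + dist (L t) (E (fl t + 1) x)"
        by (rule dist_triangle4)
      also have "\<dots> = fr s + dist (L s) (L t) + (w - fr t)" using dA[of s] dB[of t] by (simp add: dist_commute)
      finally have "of_int (fl t + 1 - fl s) * w \<le> fr s + dist (L s) (L t) + (w - fr t)" .
      then have lo: "t - s \<le> dist (L s) (L t)" using tdec[of s] tdec[of t] by (simp add: algebra_simps)
      show ?thesis using up lo by simp
    qed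
  qed
  have gl: "geodesic_line L" unfolding geodesic_line_def
  proof (intro allI)
    fix s t
    show "dist (L s) (L t) = \<bar>s - t\<bar>"
    proof (cases "s \<le> t")
      case True then show ?thesis using main[OF True] by simp
    next
      case False then show ?thesis using main[of t s] by (simp add: dist_commute)
    qed
  qed
  have shf: "E 1 (L t) = L (t + w)" for t
  proof -
    have "(t + w) / w = t / w + 1" using lp by (simp add: field_simps)
    then have f1: "fl (t + w) = fl t + 1" unfolding fl_def by simp
    then have f2: "fr (t + w) = fr t" unfolding fr_def by (simp add: algebra_simps)
    show ?thesis using Lt[of t] Lt[of "t + w"] f1 f2 E_add[of 1 "fl t"] by (simp add: add.commute)
  qed
  show ?thesis using gl shf unfolding L_def by simp
qed

end


context pact
begin

lemma axis_exists:
  fixes l :: "real \<Rightarrow> 'a"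
  assumes cat: "CAT0 TYPE('a)" and prp: "proper_space TYPE('a)" and cl: "cline l K"
    and p: "p > 0" and sh: "\<And>t. E (int p) (l t) = l (t + c)" and c: "c > 0"
  shows "\<exists>L. geodesic_line L \<and> (\<forall>t. E 1 (L t) = L (t + c / p)) \<and> translation_length (E 1) = c / p"
proof -
  interpret cline l K by (rule cl)
  have gs: "geodesic_space TYPE('a)" using cat unfolding CAT0_def by simp
  obtain j :: nat where j: "(4 * K + 1) / c < real j" using reals_Archimedean2 by blast
  have jc: "real j * c > 4 * K + 1" using j c by (simp add: field_simps)
  have jpos: "j > 0" using jc Kpos by (cases j) auto
  define p' where "p' = j * p"
  define c' where "c' = real j * c"
  have p'pos: "p' > 0" unfolding p'_def using jpos p by simp
  have c'big: "c' > 4 * K + 1" unfolding c'_def using jc .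
  have sh': "E (int p') (l t) = l (t + c')" for t
    using E_shift[where p="int p" and l=l and c=c and z="int j" and t=t, OF sh] unfolding p'_def c'_def by simp
  define w where "w = c / p"
  have wpos: "w > 0" unfolding w_def using c p by simp
  have w': "c' = real p' * w" unfolding c'_def p'_def w_def using p by simp
  have lo: "w \<le> dist y (E 1 y)" for y
  proof -
    have "c \<le> dist y (E (int p) y)" using lower_bound[where p="int p" and c=c, OF gl sh] c by simp
    also have "\<dots> \<le> real p * dist y (E 1 y)" using E_dist_le[of y p 1] by simp
    finally show ?thesis unfolding w_def using p by (simp add: field_simps)
  qed
  have tlw: "translation_length (E 1) = w"
    using tl_ge[of w "E 1", OF lo] upper_bound[OF cat gl sh _ p] c unfolding w_def by simp
  define R0 where "R0 = (c' + 1) / 2 + 2 * K"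
  define Kc where "Kc = cball (l 0) (R0 + c')"
  have R0pos: "R0 \<ge> 0" unfolding R0_def using c'big Kpos by simp
  have approx: "\<exists>x\<in>Kc. dist x (E 1 x) \<le> w + e" if e: "e > 0" for e
  proof -
    define e' where "e' = min e (1 / real p')"
    have e'pos: "e' > 0" unfolding e'_def using e p'pos by simp
    have "Inf (range (\<lambda>x. dist x (E 1 x))) < w + e'" using tlw e'pos unfolding translation_length_def by simp
    then obtain x0 where x0: "dist x0 (E 1 x0) < w + e'" using cInf_lessD[of "range (\<lambda>x. dist x (E 1 x))"] by auto
    have "dist x0 (E (int p') x0) \<le> real p' * dist x0 (E 1 x0)" using E_dist_le[of x0 p' 1] by simp
    also have "\<dots> \<le> real p' * (w + e')" using x0 by (intro mult_left_mono) auto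
    also have "\<dots> \<le> c' + 1"
    proof -
      have "real p' * e' \<le> real p' * (1 / real p')" unfolding e'_def using p'pos by (intro mult_left_mono) auto
      then show ?thesis using w' p'pos by (simp add: algebra_simps)
    qed
    finally have "dist x0 (E (int p') x0) \<le> c' + 1" .
    then have fdx: "fd x0 \<le> R0" unfolding R0_def
      by (intro near_min[OF gs E_dist sh' c'big])
    obtain s where s: "pr x0 = l s" using pr_in[of x0] by auto
    define z where "z = - \<lfloor>s / c'\<rfloor>"
    define x1 where "x1 = E (z * int p') x0"
    have c'pos: "c' > 0" using c'big Kpos by simp
    have sz: "0 \<le> s + real_of_int z * c'" "s + real_of_int z * c' < c'"
    proof -
      have f1: "of_int \<lfloor>s / c'\<rfloor> \<le> s / c'" and f2: "s / c' < of_int \<lfloor>s / c'\<rfloor> + 1" by linarith+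
      have "of_int \<lfloor>s / c'\<rfloor> * c' \<le> s / c' * c'" using mult_right_mono[OF f1, of c'] c'pos by simp
      moreover have "s / c' * c' < (of_int \<lfloor>s / c'\<rfloor> + 1) * c'" using mult_strict_right_mono[OF f2 c'pos] .
      moreover have "s / c' * c' = s" using c'pos by simp
      ultimately have "of_int \<lfloor>s / c'\<rfloor> * c' \<le> s" "s < (of_int \<lfloor>s / c'\<rfloor> + 1) * c'" by simp_all
      then show "0 \<le> s + real_of_int z * c'" "s + real_of_int z * c' < c'" unfolding z_def by (simp_all add: algebra_simps)
    qed
    have "dist x1 (E 1 x1) = dist x0 (E 1 x0)" unfolding x1_def using E_comm[of 1 "z * int p'" x0] E_dist by simp
    moreover have "x1 \<in> Kc"
    proof -
      have "dist x1 (E (z * int p') (l s)) = fd x0" unfolding x1_def fd_def using E_dist s by simp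
      moreover have "E (z * int p') (l s) = l (s + real_of_int z * c')" by (rule E_shift[where p="int p'" and l=l and c=c', OF sh'])
      moreover have "dist (l (s + real_of_int z * c')) (l 0) \<le> c'" using gl_dist[OF gl] sz by simp
      ultimately have "dist x1 (l 0) \<le> R0 + c'" using fdx dist_triangle[of x1 "l 0" "E (z * int p') (l s)"] by simp
      then show ?thesis unfolding Kc_def by (simp add: dist_commute)
    qed
    ultimately show ?thesis using x0 e'_def by (intro bexI[of _ x1]) auto
  qed
  have "compact Kc" unfolding Kc_def using prp unfolding proper_space_def by simp
  moreover have "Kc \<noteq> {}" unfolding Kc_def using R0pos c'big Kpos by simp
  moreover have "continuous_on Kc (\<lambda>x. dist x (E 1 x))" using E_cont by (intro continuous_intros) auto
  ultimately obtain xs where xs: "xs \<in> Kc" "\<And>y. y \<in> Kc \<Longrightarrow> dist xs (E 1 xs) \<le> dist y (E 1 y)"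
    using continuous_attains_inf by metis
  have Fxs: "dist xs (E 1 xs) = w"
  proof (rule antisym)
    show "dist xs (E 1 xs) \<le> w"
    proof (rule field_le_epsilon)
      fix e :: real assume "e > 0"
      then obtain y where "y \<in> Kc" "dist y (E 1 y) \<le> w + e" using approx by blast
      then show "dist xs (E 1 xs) \<le> w + e" using xs(2) by force
    qed
    show "w \<le> dist xs (E 1 xs)" by (rule lo)
  qed
  have dN: "dist xs (E (int N) xs) = real N * w" for N :: nat
  proof (rule antisym)
    show "dist xs (E (int N) xs) \<le> real N * w" using E_dist_le[of xs N 1] Fxs by simp
    have shN: "E (int (N * p')) (l t) = l (t + real N * c')" for t
      using E_shift[where p="int p'" and l=l and c=c' and z="int N" and t=t, OF sh'] by simp
    have a1: "real N * c' \<le> dist xs (E (int (N * p')) xs)"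
      using lower_bound[where p="int (N * p')" and c="real N * c'", OF gl shN] c'big Kpos by simp
    have a2: "dist xs (E (int (N * p')) xs) \<le> dist xs (E (int N) xs) + dist (E (int N) xs) (E (int (N * p')) xs)" by (rule dist_triangle)
    have a3: "dist (E (int N) xs) (E (int (N * p')) xs) = dist xs (E (int (N * p' - N)) xs)"
    proof -
      have "N \<le> N * p'" using p'pos by simp
      then have "int (N * p') - int N = int (N * p' - N)" by simp
      then show ?thesis using E_dist_diff[of "int N" xs "int (N * p')"] by simp
    qed
    have a4: "dist xs (E (int (N * p' - N)) xs) \<le> real (N * p' - N) * w" using E_dist_le[of xs "N * p' - N" 1] Fxs by simp
    have "real N * c' \<le> dist xs (E (int N) xs) + real (N * p' - N) * w" using a1 a2 a3 a4 by linarith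
    moreover have "real (N * p' - N) = real N * real p' - real N" using p'pos by (simp add: of_nat_diff)
    ultimately show "real N * w \<le> dist xs (E (int N) xs)" using w' by (simp add: algebra_simps)
  qed
  obtain c0 where c0: "geodesic_seg c0 xs (E 1 xs)" using gspace_seg[OF gs] by blast
  from axis_build[OF wpos c0 Fxs dN] show ?thesis unfolding w_def[symmetric] using tlw by blast
qed

end


lemma mink_core:
  fixes A1 A2 B1 B2 C1 C2 a b :: real
  assumes nn: "A1 \<ge> 0" "A2 \<ge> 0" "B1 \<ge> 0" "B2 \<ge> 0" "C1 \<ge> 0" "C2 \<ge> 0" and ab: "a > 0" "b > 0"
    and nA: "A1^2 + A2^2 = a^2" and nB: "B1^2 + B2^2 = b^2" and nC: "C1^2 + C2^2 = (a + b)^2"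
    and t1: "C1 \<le> A1 + B1" and t2: "C2 \<le> A2 + B2"
  shows "A1 * b = B1 * a \<and> A2 * b = B2 * a \<and> C1 = A1 + B1 \<and> C2 = A2 + B2"
proof -
  have "C1^2 \<le> (A1 + B1)^2" using t1 nn by (intro power_mono) auto
  moreover have "C2^2 \<le> (A2 + B2)^2" using t2 nn by (intro power_mono) auto
  ultimately have "(a + b)^2 \<le> (A1 + B1)^2 + (A2 + B2)^2" using nC by simp
  then have dot: "a * b \<le> A1 * B1 + A2 * B2" using nA nB by (simp add: power2_eq_square algebra_simps)
  have "(A1 * b - B1 * a)^2 + (A2 * b - B2 * a)^2 = b^2 * (A1^2 + A2^2) + a^2 * (B1^2 + B2^2) - 2 * a * b * (A1 * B1 + A2 * B2)"
    by (simp add: power2_eq_square algebra_simps)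
  also have "\<dots> = 2 * a^2 * b^2 - 2 * a * b * (A1 * B1 + A2 * B2)" using nA nB by (simp add: power2_eq_square algebra_simps)
  also have "\<dots> \<le> 2 * a^2 * b^2 - 2 * a * b * (a * b)"
    using dot ab by (simp add: mult_left_mono)
  also have "\<dots> = 0" by (simp add: power2_eq_square)
  finally have sq: "(A1 * b - B1 * a)^2 + (A2 * b - B2 * a)^2 \<le> 0" .
  have "(A1 * b - B1 * a)^2 + (A2 * b - B2 * a)^2 = 0"
    using sq sum_power2_ge_zero[of "A1 * b - B1 * a" "A2 * b - B2 * a"] by linarith
  then have X: "A1 * b = B1 * a" and Y: "A2 * b = B2 * a"
    unfolding sum_power2_eq_zero_iff by simp_all
  have "(A1 * B1 + A2 * B2) * a = a^2 * b"
  proof -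
    have "(A1 * B1 + A2 * B2) * a = A1 * (B1 * a) + A2 * (B2 * a)" by (simp add: algebra_simps)
    also have "\<dots> = (A1^2 + A2^2) * b" using X Y by (simp add: power2_eq_square algebra_simps)
    finally show ?thesis using nA by simp
  qed
  then have dot2: "A1 * B1 + A2 * B2 = a * b" using ab by (simp add: power2_eq_square)
  have sum: "(A1 + B1)^2 + (A2 + B2)^2 = (a + b)^2" using dot2 nA nB by (simp add: power2_eq_square algebra_simps)
  have c1: "C1^2 \<le> (A1 + B1)^2" using t1 nn by (intro power_mono) auto
  have c2: "C2^2 \<le> (A2 + B2)^2" using t2 nn by (intro power_mono) auto
  have "C1^2 = (A1 + B1)^2" using c1 c2 sum nC by linarith
  then have e1: "C1 = A1 + B1" using nn by (simp add: power2_eq_iff_nonneg)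
  have "C2^2 = (A2 + B2)^2" using c1 c2 sum nC by linarith
  then have e2: "C2 = A2 + B2" using nn by (simp add: power2_eq_iff_nonneg)
  show ?thesis using X Y e1 e2 by simp
qed

definition pu1 :: "(real \<Rightarrow> 'a::metric_space \<times> 'b::metric_space) \<Rightarrow> real \<Rightarrow> real \<Rightarrow> real" where
  "pu1 L s t = dist (fst (L s)) (fst (L t))"
definition pu2 :: "(real \<Rightarrow> 'a::metric_space \<times> 'b::metric_space) \<Rightarrow> real \<Rightarrow> real \<Rightarrow> real" where
  "pu2 L s t = dist (snd (L s)) (snd (L t))"

lemma pu_norm: "geodesic_line L \<Longrightarrow> (pu1 L s t)^2 + (pu2 L s t)^2 = (s - t)^2"
proof -
  assume gl: "geodesic_line L"
  have "dist (L s) (L t) = sqrt ((pu1 L s t)^2 + (pu2 L s t)^2)"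
    unfolding pu1_def pu2_def by (simp add: dist_prod_def)
  then have "sqrt ((pu1 L s t)^2 + (pu2 L s t)^2) = \<bar>s - t\<bar>" using gl_dist[OF gl] by simp
  then show ?thesis by (metis power2_abs real_sqrt_pow2 sum_power2_ge_zero)
qed

lemma mink3:
  assumes gl: "geodesic_line L" and abc: "a < b" "b < c"
  shows "pu1 L a b / (b - a) = pu1 L a c / (c - a) \<and> pu1 L b c / (c - b) = pu1 L a c / (c - a)
       \<and> pu2 L a b / (b - a) = pu2 L a c / (c - a) \<and> pu2 L b c / (c - b) = pu2 L a c / (c - a)"
proof -
  define A1 where "A1 = pu1 L a b" define A2 where "A2 = pu2 L a b"
  define B1 where "B1 = pu1 L b c" define B2 where "B2 = pu2 L b c"
  define C1 where "C1 = pu1 L a c" define C2 where "C2 = pu2 L a c"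
  have nA: "A1^2 + A2^2 = (b - a)^2" unfolding A1_def A2_def using pu_norm[OF gl, of a b] by (simp add: power2_commute)
  have nB: "B1^2 + B2^2 = (c - b)^2" unfolding B1_def B2_def using pu_norm[OF gl, of b c] by (simp add: power2_commute)
  have nC: "C1^2 + C2^2 = ((b - a) + (c - b))^2" unfolding C1_def C2_def using pu_norm[OF gl, of a c] by (simp add: power2_commute)
  have t1: "C1 \<le> A1 + B1" unfolding A1_def B1_def C1_def pu1_def by (rule dist_triangle)
  have t2: "C2 \<le> A2 + B2" unfolding A2_def B2_def C2_def pu2_def by (rule dist_triangle)
  have m: "A1 * (c - b) = B1 * (b - a) \<and> A2 * (c - b) = B2 * (b - a) \<and> C1 = A1 + B1 \<and> C2 = A2 + B2"
    by (rule mink_core) (use nA nB nC t1 t2 abc in \<open>auto simp: A1_def A2_def B1_def B2_def C1_def C2_def pu1_def pu2_def\<close>)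
  have ba: "b - a > 0" "c - b > 0" "c - a > 0" using abc by auto
  have r1: "A1 / (b - a) = C1 / (c - a)"
  proof -
    have "A1 * (c - a) = A1 * (b - a) + A1 * (c - b)" by (simp add: algebra_simps)
    also have "\<dots> = (A1 + B1) * (b - a)" using m by (simp add: algebra_simps)
    finally show ?thesis using m ba by (simp add: field_simps)
  qed
  have r2: "B1 / (c - b) = C1 / (c - a)"
  proof -
    have "B1 * (c - a) = B1 * (b - a) + B1 * (c - b)" by (simp add: algebra_simps)
    also have "\<dots> = (A1 + B1) * (c - b)" using m by (simp add: algebra_simps)
    finally show ?thesis using m ba by (simp add: field_simps)
  qed
  have r3: "A2 / (b - a) = C2 / (c - a)"
  proof -
    have "A2 * (c - a) = A2 * (b - a) + A2 * (c - b)" by (simp add: algebra_simps)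
    also have "\<dots> = (A2 + B2) * (b - a)" using m by (simp add: algebra_simps)
    finally show ?thesis using m ba by (simp add: field_simps)
  qed
  have r4: "B2 / (c - b) = C2 / (c - a)"
  proof -
    have "B2 * (c - a) = B2 * (b - a) + B2 * (c - b)" by (simp add: algebra_simps)
    also have "\<dots> = (A2 + B2) * (c - b)" using m by (simp add: algebra_simps)
    finally show ?thesis using m ba by (simp add: field_simps)
  qed
  show ?thesis using r1 r2 r3 r4 unfolding A1_def A2_def B1_def B2_def C1_def C2_def by simp
qed

lemma par_sub:
  assumes gl: "geodesic_line L" and st: "S \<le> s" "s < t" "t \<le> T"
  shows "pu1 L s t / (t - s) = pu1 L S T / (T - S) \<and> pu2 L s t / (t - s) = pu2 L S T / (T - S)"
proof -
  have step1: "pu1 L s T / (T - s) = pu1 L S T / (T - S) \<and> pu2 L s T / (T - s) = pu2 L S T / (T - S)"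
  proof (cases "S = s")
    case True then show ?thesis by simp
  next
    case False
    then have "S < s" using st by simp
    then show ?thesis using mink3[OF gl, of S s T] st by simp
  qed
  have step2: "pu1 L s t / (t - s) = pu1 L s T / (T - s) \<and> pu2 L s t / (t - s) = pu2 L s T / (T - s)"
  proof (cases "t = T")
    case True then show ?thesis by simp
  next
    case False
    then have "t < T" using st by simp
    then show ?thesis using mink3[OF gl, of s t T] st by simp
  qed
  show ?thesis using step1 step2 by simp
qed


definition pmap :: "('a \<Rightarrow> 'a) \<Rightarrow> ('b \<Rightarrow> 'b) \<Rightarrow> 'a \<times> 'b \<Rightarrow> 'a \<times> 'b" where
  "pmap g1 g2 = (\<lambda>(x, y). (g1 x, g2 y))"

lemma pmap_simp: "pmap g1 g2 z = (g1 (fst z), g2 (snd z))"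
  unfolding pmap_def by (cases z) simp

lemma dist_pair: "dist (z::'a::metric_space \<times> 'b::metric_space) w = sqrt ((dist (fst z) (fst w))^2 + (dist (snd z) (snd w))^2)"
  by (simp add: dist_prod_def)

lemma pmap_iso:
  assumes "\<And>x y. dist (g1 x) (g1 y) = dist x y" "\<And>x y. dist (g2 x) (g2 y) = dist x y"
  shows "dist (pmap g1 g2 z) (pmap g1 g2 w) = dist z w"
  using assms by (simp add: pmap_simp dist_pair)

lemma prod_tl_lower:
  fixes g1 :: "'a::metric_space \<Rightarrow> 'a" and g2 :: "'b::metric_space \<Rightarrow> 'b"
  shows "sqrt ((translation_length g1)^2 + (translation_length g2)^2) \<le> dist z (pmap g1 g2 z)"
proof -
  have a: "(translation_length g1)^2 \<le> (dist (fst z) (g1 (fst z)))^2"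
    using tl_le[of g1 "fst z"] tl_nonneg[of g1] by (intro power_mono) auto
  have b: "(translation_length g2)^2 \<le> (dist (snd z) (g2 (snd z)))^2"
    using tl_le[of g2 "snd z"] tl_nonneg[of g2] by (intro power_mono) auto
  show ?thesis unfolding dist_pair[of z] pmap_simp using a b by (intro real_sqrt_le_mono) simp
qed

lemma prod_axis:
  fixes g1 :: "'a::metric_space \<Rightarrow> 'a" and g2 :: "'b::metric_space \<Rightarrow> 'b"
  assumes L1: "geodesic_line L1" and sh1: "\<And>t. g1 (L1 t) = L1 (t + translation_length g1)"
    and L2: "geodesic_line L2" and sh2: "\<And>t. g2 (L2 t) = L2 (t + translation_length g2)"
    and p1: "translation_length g1 > 0" and p2: "translation_length g2 > 0"
  shows "translation_length (pmap g1 g2) = sqrt ((translation_length g1)^2 + (translation_length g2)^2)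
     \<and> (\<exists>L. is_axis (pmap g1 g2) L)"
proof -
  define a where "a = translation_length g1"
  define b where "b = translation_length g2"
  define w where "w = sqrt (a^2 + b^2)"
  have "0 < a^2 + b^2" unfolding a_def b_def using p1 by (intro add_pos_nonneg) auto
  then have wpos: "w > 0" unfolding w_def by simp
  have w2: "w^2 = a^2 + b^2" unfolding w_def by simp
  define L where "L t = (L1 (a / w * t), L2 (b / w * t))" for t
  have gl: "geodesic_line L" unfolding geodesic_line_def
  proof (intro allI)
    fix s t
    have "dist (L s) (L t) = sqrt ((a / w * s - a / w * t)^2 + (b / w * s - b / w * t)^2)"
      unfolding L_def dist_pair by (simp add: gl_dist[OF L1] gl_dist[OF L2])
    also have "(a / w * s - a / w * t)^2 + (b / w * s - b / w * t)^2 = (s - t)^2 * ((a^2 + b^2) / w^2)"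
    proof -
      have "a / w * s - a / w * t = (a / w) * (s - t)" "b / w * s - b / w * t = (b / w) * (s - t)"
        by (simp_all only: right_diff_distrib)
      then have "(a / w * s - a / w * t)^2 + (b / w * s - b / w * t)^2 = (a / w)^2 * (s - t)^2 + (b / w)^2 * (s - t)^2"
        by (simp only: power_mult_distrib)
      also have "\<dots> = (s - t)^2 * ((a^2 + b^2) / w^2)" by (simp add: power_divide algebra_simps add_divide_distrib)
      finally show ?thesis .
    qed
    also have "(a^2 + b^2) / w^2 = 1" unfolding w2[symmetric] using wpos by simp
    finally show "dist (L s) (L t) = \<bar>s - t\<bar>" by simp
  qed
  have shL: "pmap g1 g2 (L t) = L (t + w)" for t
  proof -
    have "a / w * (t + w) = a / w * t + a" using wpos by (simp add: field_simps)
    moreover have "b / w * (t + w) = b / w * t + b" using wpos by (simp add: field_simps)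
    ultimately show ?thesis unfolding L_def pmap_simp using sh1 sh2 a_def b_def by simp
  qed
  have tlw: "translation_length (pmap g1 g2) = w"
  proof (rule tl_eq)
    show "w \<le> dist x (pmap g1 g2 x)" for x using prod_tl_lower[of g1 g2 x] unfolding w_def a_def b_def .
    show "dist (L 0) (pmap g1 g2 (L 0)) = w" using shL[of 0] gl_dist[OF gl, of 0 w] wpos by simp
  qed
  have "is_axis (pmap g1 g2) L" unfolding is_axis_def
  proof (intro conjI allI)
    show "geodesic_line L" by (rule gl)
    show "pmap g1 g2 ` range L = range L"
    proof
      show "pmap g1 g2 ` range L \<subseteq> range L" using shL by auto
      show "range L \<subseteq> pmap g1 g2 ` range L"
      proof
        fix y assume "y \<in> range L"
        then obtain t where "y = L t" by auto
        then have "y = pmap g1 g2 (L (t - w))" using shL[of "t - w"] by simp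
        then show "y \<in> pmap g1 g2 ` range L" by blast
      qed
    qed
    fix t show "dist (L t) (pmap g1 g2 (L t)) = translation_length (pmap g1 g2)"
      using shL[of t] gl_dist[OF gl, of t "t + w"] tlw wpos by simp
  qed
  then show ?thesis using tlw unfolding w_def a_def b_def by blast
qed

lemma prod_slope:
  fixes g1 :: "'a::metric_space \<Rightarrow> 'a" and g2 :: "'b::metric_space \<Rightarrow> 'b"
  assumes ax: "is_axis (pmap g1 g2) L"
    and i1: "\<And>x y. dist (g1 x) (g1 y) = dist x y" and i2: "\<And>x y. dist (g2 x) (g2 y) = dist x y"
    and tl: "translation_length (pmap g1 g2) = sqrt ((translation_length g1)^2 + (translation_length g2)^2)"
    and p2: "translation_length g2 > 0"
  shows "slope_line L = ereal (translation_length g1 / translation_length g2)"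
proof -
  define a where "a = translation_length g1"
  define b where "b = translation_length g2"
  define w where "w = sqrt (a^2 + b^2)"
  have a0: "a \<ge> 0" unfolding a_def by (rule tl_nonneg)
  have bpos: "b > 0" unfolding b_def by (rule p2)
  have "0 < a^2 + b^2" using bpos by (intro add_nonneg_pos) auto
  then have wpos: "w > 0" unfolding w_def by simp
  have w2: "w^2 = a^2 + b^2" unfolding w_def by simp
  have gl: "geodesic_line L" using ax unfolding is_axis_def by simp
  have dl: "dist (L t) (pmap g1 g2 (L t)) = w" for t using ax tl unfolding is_axis_def w_def a_def b_def by simp
  have inr: "pmap g1 g2 (L t) \<in> range L" for t using ax unfolding is_axis_def by blast
  obtain \<sigma> where sg: "\<bar>\<sigma>\<bar> = w" "\<And>t. pmap g1 g2 (L t) = L (t + \<sigma>)"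
    using axis_shift[OF gl pmap_iso[OF i1 i2] inr dl wpos] by blast
  have eL: "L \<sigma> = (g1 (fst (L 0)), g2 (snd (L 0)))" using sg(2)[of 0] by (simp add: pmap_simp)
  have f: "fst (L \<sigma>) = g1 (fst (L 0))" "snd (L \<sigma>) = g2 (snd (L 0))" by (simp_all add: eL)
  have u1: "pu1 L 0 \<sigma> \<ge> a" unfolding pu1_def a_def using f tl_le[of g1 "fst (L 0)"] by simp
  have u2: "pu2 L 0 \<sigma> \<ge> b" unfolding pu2_def b_def using f tl_le[of g2 "snd (L 0)"] by simp
  have sq: "(0 - \<sigma>)^2 = w^2"
  proof -
    have "(0 - \<sigma>)^2 = (\<bar>\<sigma>\<bar>)^2" by simp
    then show ?thesis using sg(1) by simp
  qed
  have nrm: "(pu1 L 0 \<sigma>)^2 + (pu2 L 0 \<sigma>)^2 = a^2 + b^2" using pu_norm[OF gl, of 0 \<sigma>] sq w2 by simp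
  have s1: "(pu1 L 0 \<sigma>)^2 \<ge> a^2" using u1 a0 by (intro power_mono) auto
  have s2: "(pu2 L 0 \<sigma>)^2 \<ge> b^2" using u2 bpos by (intro power_mono) auto
  have "(pu1 L 0 \<sigma>)^2 = a^2" using s1 s2 nrm by linarith
  then have e1: "pu1 L 0 \<sigma> = a" using a0 unfolding pu1_def by (simp add: power2_eq_iff_nonneg)
  have "(pu2 L 0 \<sigma>)^2 = b^2" using s1 s2 nrm by linarith
  then have e2: "pu2 L 0 \<sigma> = b" using bpos unfolding pu2_def by (simp add: power2_eq_iff_nonneg)
  define S where "S = - (w + 1)"
  define T where "T = w + 1"
  define m where "m = min 0 \<sigma>"
  define M where "M = max 0 \<sigma>"
  have mM: "M - m = w" unfolding m_def M_def using sg(1) by auto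
  have um: "pu1 L m M = a \<and> pu2 L m M = b"
    unfolding m_def M_def using e1 e2 by (cases "\<sigma> \<ge> 0") (auto simp: pu1_def pu2_def dist_commute min_def max_def)
  have P1: "pu1 L 0 1 / (1 - 0) = pu1 L S T / (T - S) \<and> pu2 L 0 1 / (1 - 0) = pu2 L S T / (T - S)"
    by (rule par_sub[OF gl]) (use wpos in \<open>auto simp: S_def T_def\<close>)
  have P2: "pu1 L m M / (M - m) = pu1 L S T / (T - S) \<and> pu2 L m M / (M - m) = pu2 L S T / (T - S)"
    by (rule par_sub[OF gl]) (use wpos sg(1) mM in \<open>auto simp: S_def T_def m_def M_def\<close>)
  have q1: "pu1 L 0 1 = pu1 L S T / (T - S)" and q2: "pu2 L 0 1 = pu2 L S T / (T - S)"
    using P1 by simp_all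
  have q3: "pu1 L m M / (M - m) = pu1 L S T / (T - S)" and q4: "pu2 L m M / (M - m) = pu2 L S T / (T - S)"
    using P2 by simp_all
  have um1: "pu1 L m M = a" and um2: "pu2 L m M = b" using um by simp_all
  from q3 have "a / w = pu1 L S T / (T - S)" unfolding um1 mM .
  then have v1: "pu1 L 0 1 = a / w" by (rule trans[OF q1 sym])
  from q4 have "b / w = pu2 L S T / (T - S)" unfolding um2 mM .
  then have v2: "pu2 L 0 1 = b / w" by (rule trans[OF q2 sym])
  have nc: "\<not> (\<forall>t\<ge>0. snd (L t) = snd (L 0))"
  proof
    assume "\<forall>t\<ge>0. snd (L t) = snd (L 0)"
    then have "(1::real) \<ge> 0 \<longrightarrow> snd (L 1) = snd (L 0)" by (rule spec)
    then have "snd (L 1) = snd (L 0)" by simp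
    then have "pu2 L 0 1 = 0" unfolding pu2_def by simp
    then show False using v2 bpos wpos by simp
  qed
  have "slope_line L = ereal (pu1 L 0 1 / pu2 L 0 1)"
    unfolding slope_line_def slope_ray_def if_not_P[OF nc] pu1_def pu2_def ..
  also have "pu1 L 0 1 / pu2 L 0 1 = a / b" using v1 v2 wpos by simp
  finally show ?thesis unfolding a_def b_def .
qed

lemma prod_slope_isom:
  fixes g1 :: "'a::metric_space \<Rightarrow> 'a" and g2 :: "'b::metric_space \<Rightarrow> 'b"
  assumes ex: "\<exists>L. is_axis (pmap g1 g2) L"
    and i1: "\<And>x y. dist (g1 x) (g1 y) = dist x y" and i2: "\<And>x y. dist (g2 x) (g2 y) = dist x y"
    and tl: "translation_length (pmap g1 g2) = sqrt ((translation_length g1)^2 + (translation_length g2)^2)"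
    and p2: "translation_length g2 > 0"
  shows "slope_isom (pmap g1 g2) = ereal (translation_length g1 / translation_length g2)"
proof -
  have "is_axis (pmap g1 g2) (SOME L. is_axis (pmap g1 g2) L)" using ex by (rule someI_ex)
  then show ?thesis unfolding slope_isom_def by (rule prod_slope[OF _ i1 i2 tl p2])
qed


lemma diag_pmap: "diag_action \<rho>1 \<rho>2 g = pmap (\<rho>1 g) (\<rho>2 g)"
  unfolding diag_action_def pmap_def by simp

lemma gl_ray: "geodesic_line l \<Longrightarrow> geodesic_ray l"
  unfolding geodesic_line_def geodesic_ray_def by auto

lemma self_bd: "geodesic_line l \<Longrightarrow> l \<in> bd_point l"
  unfolding bd_point_def asymptotic_def using gl_ray by (auto intro: exI[of _ 0])

lemma fix_bound:
  assumes gl: "geodesic_line l" and fp: "fixes_bd g (endpoint_plus l)" and fm: "fixes_bd g (endpoint_minus l)"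
  shows "\<exists>C. \<forall>t. dist (g (l t)) (l t) \<le> C"
proof -
  have "g \<circ> l \<in> bd_act g (bd_point l)" unfolding bd_act_def using self_bd[OF gl] by blast
  then have "g \<circ> l \<in> bd_point l" using fp unfolding fixes_bd_def endpoint_plus_def by simp
  then obtain C1 where C1: "\<And>t. t \<ge> 0 \<Longrightarrow> dist (l t) (g (l t)) \<le> C1"
    unfolding bd_point_def asymptotic_def by auto
  have gl': "geodesic_line (\<lambda>t. l (- t))" by (rule gl_rev[OF gl])
  have "g \<circ> (\<lambda>t. l (- t)) \<in> bd_act g (bd_point (\<lambda>t. l (- t)))" unfolding bd_act_def using self_bd[OF gl'] by blast
  then have "g \<circ> (\<lambda>t. l (- t)) \<in> bd_point (\<lambda>t. l (- t))" using fm unfolding fixes_bd_def endpoint_minus_def by simp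
  then obtain C2 where C2: "\<And>t. t \<ge> 0 \<Longrightarrow> dist (l (- t)) (g (l (- t))) \<le> C2"
    unfolding bd_point_def asymptotic_def by auto
  have "dist (g (l t)) (l t) \<le> max C1 C2" for t
  proof (cases "t \<ge> 0")
    case True then show ?thesis using C1[of t] by (simp add: dist_commute)
  next
    case False then show ?thesis using C2[of "- t"] by (simp add: dist_commute)
  qed
  then show ?thesis by blast
qed

lemma cline_range:
  assumes "cline l K" "geodesic_line m" "range m = range l"
  shows "cline m K"
  using assms unfolding cline_def by simp

lemma pos_shift:
  fixes l :: "real \<Rightarrow> 'a::metric_space"
  assumes gl: "geodesic_line l" and sh: "\<And>t. g (l t) = l (t + c)"
  shows "\<exists>m. geodesic_line m \<and> range m = range l \<and> (\<forall>t. g (m t) = m (t + \<bar>c\<bar>))"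
proof (cases "c \<ge> 0")
  case True then show ?thesis using gl sh by (intro exI[of _ l]) auto
next
  case False
  have "g (l (- t)) = l (- (t + \<bar>c\<bar>))" for t using sh[of "- t"] False by simp
  then show ?thesis using gl_rev[OF gl] range_rev[of l] by (intro exI[of _ "\<lambda>t. l (- t)"]) auto
qed

lemma group_cancel:
  fixes G (structure)
  assumes grp: "group G" and a: "a \<in> carrier G" and b: "b \<in> carrier G"
    and eq: "a [^]\<^bsub>G\<^esub> (z::int) \<otimes>\<^bsub>G\<^esub> b [^]\<^bsub>G\<^esub> (int n) = a [^]\<^bsub>G\<^esub> (z'::int) \<otimes>\<^bsub>G\<^esub> b [^]\<^bsub>G\<^esub> (int n')"
    and nn: "n' < n"
  shows "b [^]\<^bsub>G\<^esub> (int (n - n')) = a [^]\<^bsub>G\<^esub> (z' - z)"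
proof -
  interpret group G by (rule grp)
  have "a [^] (- z) \<otimes> (a [^] z \<otimes> b [^] (int n)) = a [^] (- z) \<otimes> (a [^] z' \<otimes> b [^] (int n'))"
    using eq by simp
  then have "(a [^] (- z) \<otimes> a [^] z) \<otimes> b [^] (int n) = (a [^] (- z) \<otimes> a [^] z') \<otimes> b [^] (int n')"
    using a b by (simp add: m_assoc)
  moreover have m1: "a [^] (- z) \<otimes> a [^] z = \<one>" using a int_pow_mult[of a "- z" z] by simp
  moreover have m2: "a [^] (- z) \<otimes> a [^] z' = a [^] (z' - z)" using a int_pow_mult[of a "- z" z'] by simp
  ultimately have e1: "b [^] (int n) = a [^] (z' - z) \<otimes> b [^] (int n')"
    using a b by simp
  have "b [^] (int (n - n')) = b [^] (int n + - int n')" using nn by (simp add: of_nat_diff)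
  also have "\<dots> = b [^] (int n) \<otimes> b [^] (- int n')" using b by (rule int_pow_mult)
  also have "\<dots> = a [^] (z' - z) \<otimes> (b [^] (int n') \<otimes> b [^] (- int n'))" using e1 a b by (simp add: m_assoc)
  also have "b [^] (int n') \<otimes> b [^] (- int n') = \<one>" using b int_pow_mult[of b "int n'" "- int n'"] by simp
  finally show ?thesis using a by simp
qed

lemma pigeon:
  fixes f :: "nat \<Rightarrow> 'b"
  assumes "finite F" "\<And>n. f n \<in> F"
  shows "\<exists>n n'. n' < n \<and> f n = f n'"
proof -
  have "finite (range f)" using assms by (meson finite_subset image_subsetI)
  then have "\<not> inj f" using finite_imageD[of f UNIV] by auto
  then obtain x y where "x \<noteq> y" "f x = f y" unfolding inj_def by blast
  then show ?thesis by (cases "x < y") (metis linorder_neqE_nat)+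
qed

lemma floor_shift:
  fixes s \<sigma> :: real
  assumes "\<sigma> \<noteq> 0"
  shows "\<bar>s + real_of_int (- \<lfloor>s / \<sigma>\<rfloor>) * \<sigma>\<bar> \<le> \<bar>\<sigma>\<bar>"
proof -
  have "\<bar>s / \<sigma> - of_int \<lfloor>s / \<sigma>\<rfloor>\<bar> \<le> 1" by linarith
  then have "\<bar>s / \<sigma> - of_int \<lfloor>s / \<sigma>\<rfloor>\<bar> * \<bar>\<sigma>\<bar> \<le> \<bar>\<sigma>\<bar>" by (simp add: mult_left_le_one_le)
  also have "\<bar>s / \<sigma> - of_int \<lfloor>s / \<sigma>\<rfloor>\<bar> * \<bar>\<sigma>\<bar> = \<bar>(s / \<sigma> - of_int \<lfloor>s / \<sigma>\<rfloor>) * \<sigma>\<bar>"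
    by (simp only: abs_mult)
  also have "(s / \<sigma> - of_int \<lfloor>s / \<sigma>\<rfloor>) * \<sigma> = s - of_int \<lfloor>s / \<sigma>\<rfloor> * \<sigma>"
    using assms by (simp add: left_diff_distrib)
  finally show ?thesis by simp
qed


lemma gl_comp: "geodesic_line l \<Longrightarrow> (\<And>x y. dist (f x) (f y) = dist x y) \<Longrightarrow> geodesic_line (\<lambda>t. f (l t))"
  unfolding geodesic_line_def by simp

lemma factor_sigma:
  assumes act: "isom_action G \<rho>" and a: "\<alpha> \<in> carrier G" and ax: "is_axis (\<rho> \<alpha>) l"
    and hyp: "translation_length (\<rho> \<alpha>) > 0"
  shows "\<exists>\<sigma>. \<bar>\<sigma>\<bar> = translation_length (\<rho> \<alpha>) \<and> (\<forall>t. \<rho> \<alpha> (l t) = l (t + \<sigma>))"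
proof -
  have gl: "geodesic_line l" using ax unfolding is_axis_def by simp
  have inr: "\<rho> \<alpha> (l t) \<in> range l" for t using ax unfolding is_axis_def by blast
  have dl: "dist (l t) (\<rho> \<alpha> (l t)) = translation_length (\<rho> \<alpha>)" for t using ax unfolding is_axis_def by blast
  show ?thesis by (rule axis_shift[OF gl isometry_dist[OF act_isom[OF act a]] inr dl hyp])
qed

lemma factor_alpha:
  assumes act: "isom_action G \<rho>" and a: "\<alpha> \<in> carrier G" and ax: "is_axis (\<rho> \<alpha>) l"
    and hyp: "translation_length (\<rho> \<alpha>) > 0"
  shows "\<exists>L. geodesic_line L \<and> (\<forall>t. \<rho> \<alpha> (L t) = L (t + translation_length (\<rho> \<alpha>)))"
proof -
  have gl: "geodesic_line l" using ax unfolding is_axis_def by simp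
  obtain \<sigma> where s: "\<bar>\<sigma>\<bar> = translation_length (\<rho> \<alpha>)" "\<And>t. \<rho> \<alpha> (l t) = l (t + \<sigma>)"
    using factor_sigma[OF act a ax hyp] by blast
  from pos_shift[OF gl, of "\<rho> \<alpha>" \<sigma>] s show ?thesis by metis
qed

lemma factor_beta:
  fixes \<rho> :: "'g \<Rightarrow> 'a::metric_space \<Rightarrow> 'a"
  assumes cat: "CAT0 TYPE('a)" and prp: "proper_space TYPE('a)" and grp: "group G"
    and act: "isom_action G \<rho>" and a: "\<alpha> \<in> carrier G" and b: "\<beta> \<in> carrier G"
    and ax: "is_axis (\<rho> \<alpha>) l" and ct: "contracting l" and hyp: "translation_length (\<rho> \<alpha>) > 0"
    and p: "p > 0" and z: "z \<noteq> 0" and eq: "\<beta> [^]\<^bsub>G\<^esub> (int p) = \<alpha> [^]\<^bsub>G\<^esub> z"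
  shows "\<exists>L. geodesic_line L \<and> (\<forall>t. \<rho> \<beta> (L t) = L (t + translation_length (\<rho> \<beta>)))
          \<and> translation_length (\<rho> \<beta>) = \<bar>real_of_int z\<bar> * translation_length (\<rho> \<alpha>) / real p"
proof -
  interpret A: pact G \<rho> \<alpha> using grp act a by (rule pact.intro)
  interpret B: pact G \<rho> \<beta> using grp act b by (rule pact.intro)
  have gl: "geodesic_line l" using ax unfolding is_axis_def by simp
  obtain K where K: "K > 0" "\<And>x r. ball x r \<inter> range l = {} \<Longrightarrow> diameter (nearest_proj (range l) ` ball x r) \<le> K"
    using ct unfolding contracting_def by blast
  have cl: "cline l K" by (rule cline.intro) (use gl K in auto)
  obtain \<sigma> where s: "\<bar>\<sigma>\<bar> = translation_length (\<rho> \<alpha>)" "\<And>t. \<rho> \<alpha> (l t) = l (t + \<sigma>)"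
    using factor_sigma[OF act a ax hyp] by blast
  have sh1: "A.E 1 (l t) = l (t + \<sigma>)" for t using s(2) A.E_1 by simp
  have shz: "A.E z (l t) = l (t + real_of_int z * \<sigma>)" for t
    using A.E_shift[where p=1 and l=l and c=\<sigma> and z=z and t=t, OF sh1] by simp
  have shb: "B.E (int p) (l t) = l (t + real_of_int z * \<sigma>)" for t
    using shz[of t] eq unfolding A.E_def B.E_def by simp
  obtain m where m: "geodesic_line m" "range m = range l" "\<And>t. B.E (int p) (m t) = m (t + \<bar>real_of_int z * \<sigma>\<bar>)"
    using pos_shift[OF gl shb] by blast
  have clm: "cline m K" by (rule cline_range[OF cl m(1) m(2)])
  have cpos: "\<bar>real_of_int z * \<sigma>\<bar> > 0" using z s hyp by auto
  obtain L where L: "geodesic_line L" "\<And>t. B.E 1 (L t) = L (t + \<bar>real_of_int z * \<sigma>\<bar> / real p)"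
    "translation_length (B.E 1) = \<bar>real_of_int z * \<sigma>\<bar> / real p"
    using B.axis_exists[OF cat prp clm p m(3) cpos] by blast
  have tl: "translation_length (\<rho> \<beta>) = \<bar>real_of_int z\<bar> * translation_length (\<rho> \<alpha>) / real p"
    using L(3) B.E_1 s(1) by (simp add: abs_mult)
  show ?thesis using L B.E_1 tl s(1) by (intro exI[of _ L]) (simp add: abs_mult)
qed


lemma commensurate:
  fixes \<rho> :: "'g \<Rightarrow> 'a::metric_space \<Rightarrow> 'a" and G (structure)
  assumes prp: "proper_space TYPE('a)" and grp: "group G"
    and act: "isom_action G \<rho>" and pd: "properly_discontinuous G \<rho>" and a: "\<alpha> \<in> carrier G" and b: "\<beta> \<in> carrier G"
    and ax: "is_axis (\<rho> \<alpha>) l" and ct: "contracting l" and hyp: "translation_length (\<rho> \<alpha>) > 0"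
    and fp: "fixes_bd (\<rho> \<beta>) (endpoint_plus l)" and fm: "fixes_bd (\<rho> \<beta>) (endpoint_minus l)"
    and inf: "\<forall>n::nat. n > 0 \<longrightarrow> \<beta> [^] n \<noteq> \<one>"
  shows "\<exists>p z. p > 0 \<and> z \<noteq> 0 \<and> \<beta> [^] (int p) = \<alpha> [^] (z::int)"
proof -
  interpret group G by (rule grp)
  interpret A: pact G \<rho> \<alpha> using grp act a by (rule pact.intro)
  interpret B: pact G \<rho> \<beta> using grp act b by (rule pact.intro)
  have gl: "geodesic_line l" using ax unfolding is_axis_def by simp
  obtain K where K: "K > 0" "\<And>x r. ball x r \<inter> range l = {} \<Longrightarrow> diameter (nearest_proj (range l) ` ball x r) \<le> K"
    using ct unfolding contracting_def by blast
  have cl: "cline l K" by (rule cline.intro) (use gl K in auto)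
  interpret C: cline l K by (rule cl)
  obtain \<sigma> where s: "\<bar>\<sigma>\<bar> = translation_length (\<rho> \<alpha>)" "\<And>t. \<rho> \<alpha> (l t) = l (t + \<sigma>)"
    using factor_sigma[OF act a ax hyp] by blast
  have snz: "\<sigma> \<noteq> 0" using s(1) hyp by auto
  have sh1: "A.E 1 (l t) = l (t + \<sigma>)" for t using s(2) A.E_1 by simp
  have shz: "A.E z (l t) = l (t + real_of_int z * \<sigma>)" for z t
    using A.E_shift[where p=1 and l=l and c=\<sigma> and z=z and t=t, OF sh1] by simp
  obtain Cb where Cb: "\<And>t. dist (\<rho> \<beta> (l t)) (l t) \<le> Cb" using fix_bound[OF gl fp fm] by blast
  have bn: "dist (B.E (int n) (l t)) (l t) \<le> real n * Cb" for n t
  proof (induction n)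
    case 0 then show ?case using B.E_0 by simp
  next
    case (Suc n)
    have "B.E (int (Suc n)) (l t) = B.E (int n) (B.E 1 (l t))" using B.E_add[of "int n" 1] by (simp add: add.commute)
    then have "dist (B.E (int (Suc n)) (l t)) (l t) \<le> dist (B.E (int n) (B.E 1 (l t))) (B.E (int n) (l t)) + dist (B.E (int n) (l t)) (l t)"
      using dist_triangle by metis
    also have "dist (B.E (int n) (B.E 1 (l t))) (B.E (int n) (l t)) = dist (\<rho> \<beta> (l t)) (l t)" using B.E_dist B.E_1 by simp
    finally show ?case using Suc Cb[of t] by (simp add: algebra_simps)
  qed
  have near: "C.fd (B.E (int n) (l 0)) \<le> 14 * K" for n
    using C.near_line[OF gl_comp[OF gl B.E_dist[of "int n"]], of "real n * Cb" 0] bn by blast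
  define sn where "sn n = (SOME s. C.pr (B.E (int n) (l 0)) = l s)" for n
  have sn: "C.pr (B.E (int n) (l 0)) = l (sn n)" for n
  proof -
    have "\<exists>s. C.pr (B.E (int n) (l 0)) = l s" using C.pr_in by auto
    then show ?thesis unfolding sn_def by (rule someI_ex)
  qed
  define zn where "zn n = - \<lfloor>sn n / \<sigma>\<rfloor>" for n
  define \<gamma> where "\<gamma> n = \<alpha> [^] (zn n) \<otimes> \<beta> [^] (int n)" for n
  define Kc where "Kc = cball (l 0) (14 * K + \<bar>\<sigma>\<bar>)"
  have cKc: "compact Kc" unfolding Kc_def using prp unfolding proper_space_def by simp
  have l0: "l 0 \<in> Kc" unfolding Kc_def using K by simp
  have gin: "\<gamma> n \<in> {g \<in> carrier G. \<rho> g ` Kc \<inter> Kc \<noteq> {}}" for n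
  proof -
    have gc: "\<gamma> n \<in> carrier G" unfolding \<gamma>_def using a b by simp
    have e: "\<rho> (\<gamma> n) (l 0) = A.E (zn n) (B.E (int n) (l 0))"
      unfolding \<gamma>_def A.E_def B.E_def using act_mult[OF act] a b by simp
    have "dist (l 0) (A.E (zn n) (B.E (int n) (l 0)))
        \<le> dist (l 0) (l (sn n + real_of_int (zn n) * \<sigma>)) + dist (l (sn n + real_of_int (zn n) * \<sigma>)) (A.E (zn n) (B.E (int n) (l 0)))"
      by (rule dist_triangle)
    also have "dist (l 0) (l (sn n + real_of_int (zn n) * \<sigma>)) \<le> \<bar>\<sigma>\<bar>"
      using gl_dist[OF gl] floor_shift[OF snz, of "sn n"] unfolding zn_def by simp
    also have "dist (l (sn n + real_of_int (zn n) * \<sigma>)) (A.E (zn n) (B.E (int n) (l 0))) = C.fd (B.E (int n) (l 0))"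
    proof -
      have "dist (l (sn n + real_of_int (zn n) * \<sigma>)) (A.E (zn n) (B.E (int n) (l 0)))
          = dist (A.E (zn n) (l (sn n))) (A.E (zn n) (B.E (int n) (l 0)))" using shz[of "zn n" "sn n"] by simp
      also have "\<dots> = dist (l (sn n)) (B.E (int n) (l 0))" by (rule A.E_dist)
      finally show ?thesis using sn[of n] unfolding C.fd_def by (simp add: dist_commute)
    qed
    finally have "dist (l 0) (\<rho> (\<gamma> n) (l 0)) \<le> 14 * K + \<bar>\<sigma>\<bar>" using e near[of n] by simp
    then have "\<rho> (\<gamma> n) (l 0) \<in> \<rho> (\<gamma> n) ` Kc \<inter> Kc" using l0 unfolding Kc_def by auto
    then show ?thesis using gc by blast
  qed
  have fin: "finite {g \<in> carrier G. \<rho> g ` Kc \<inter> Kc \<noteq> {}}" using pd cKc unfolding properly_discontinuous_def by blast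
  obtain n n' where nn: "n' < n" "\<gamma> n = \<gamma> n'" using pigeon[OF fin gin] by blast
  have eq: "\<beta> [^] (int (n - n')) = \<alpha> [^] (zn n' - zn n)"
    by (rule group_cancel[OF grp a b _ nn(1)]) (use nn(2) in \<open>simp add: \<gamma>_def\<close>)
  have znz: "zn n' - zn n \<noteq> 0"
  proof
    assume "zn n' - zn n = 0"
    then have "\<beta> [^] (n - n') = \<one>" using eq by (simp add: int_pow_int)
    then show False using inf nn(1) by auto
  qed
  show ?thesis using eq znz nn(1) by (intro exI[of _ "n - n'"] exI[of _ "zn n' - zn n"]) auto
qed


theorem lemma3p4:
  fixes G :: "('g, 'm) monoid_scheme"
    and \<rho>1 :: "'g \<Rightarrow> 'a::metric_space \<Rightarrow> 'a"
    and \<rho>2 :: "'g \<Rightarrow> 'b::metric_space \<Rightarrow> 'b"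
    and \<alpha> \<beta> :: 'g
  assumes "proper_space TYPE('a)" and "CAT0 TYPE('a)"
    and "proper_space TYPE('b)" and "CAT0 TYPE('b)"
    and "group G" and "infinite (carrier G)"
    and "convex_cocompact G \<rho>1" and "convex_cocompact G \<rho>2"
    and "convex_cocompact G (diag_action \<rho>1 \<rho>2)"
    and "\<alpha> \<in> carrier G" and "rank_one (\<rho>1 \<alpha>)" and "rank_one (\<rho>2 \<alpha>)"
    and "\<beta> \<in> carrier G" and "\<forall>n::nat. n > 0 \<longrightarrow> \<beta> [^]\<^bsub>G\<^esub> n \<noteq> \<one>\<^bsub>G\<^esub>"
    and "\<exists>l. is_axis (\<rho>1 \<alpha>) l \<and> contracting l \<and>
           fixes_bd (\<rho>1 \<beta>) (endpoint_plus l) \<and> fixes_bd (\<rho>1 \<beta>) (endpoint_minus l)"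
    and "\<exists>l. is_axis (\<rho>2 \<alpha>) l \<and> contracting l \<and>
           fixes_bd (\<rho>2 \<beta>) (endpoint_plus l) \<and> fixes_bd (\<rho>2 \<beta>) (endpoint_minus l)"
  shows "slope_isom (diag_action \<rho>1 \<rho>2 \<beta>) = slope_isom (diag_action \<rho>1 \<rho>2 \<alpha>)"
proof -
  have act1: "isom_action G \<rho>1" and pd1: "properly_discontinuous G \<rho>1" using assms(7) unfolding convex_cocompact_def by auto
  have act2: "isom_action G \<rho>2" using assms(8) unfolding convex_cocompact_def by auto
  obtain l1 where l1: "is_axis (\<rho>1 \<alpha>) l1" "contracting l1" "fixes_bd (\<rho>1 \<beta>) (endpoint_plus l1)" "fixes_bd (\<rho>1 \<beta>) (endpoint_minus l1)"
    using assms(15) by blast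
  obtain l2 where l2: "is_axis (\<rho>2 \<alpha>) l2" "contracting l2"
    using assms(16) by blast
  have h1: "translation_length (\<rho>1 \<alpha>) > 0" using assms(11) unfolding rank_one_def hyperbolic_def by simp
  have h2: "translation_length (\<rho>2 \<alpha>) > 0" using assms(12) unfolding rank_one_def hyperbolic_def by simp
  obtain p z where pz: "p > 0" "z \<noteq> 0" "\<beta> [^]\<^bsub>G\<^esub> (int p) = \<alpha> [^]\<^bsub>G\<^esub> (z::int)"
    using commensurate[OF assms(1) assms(5) act1 pd1 assms(10) assms(13) l1(1) l1(2) h1 l1(3) l1(4) assms(14)] by blast
  obtain Lb1 where Lb1: "geodesic_line Lb1" "\<And>t. \<rho>1 \<beta> (Lb1 t) = Lb1 (t + translation_length (\<rho>1 \<beta>))"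
    "translation_length (\<rho>1 \<beta>) = \<bar>real_of_int z\<bar> * translation_length (\<rho>1 \<alpha>) / real p"
    using factor_beta[OF assms(2) assms(1) assms(5) act1 assms(10) assms(13) l1(1) l1(2) h1 pz] by blast
  obtain Lb2 where Lb2: "geodesic_line Lb2" "\<And>t. \<rho>2 \<beta> (Lb2 t) = Lb2 (t + translation_length (\<rho>2 \<beta>))"
    "translation_length (\<rho>2 \<beta>) = \<bar>real_of_int z\<bar> * translation_length (\<rho>2 \<alpha>) / real p"
    using factor_beta[OF assms(4) assms(3) assms(5) act2 assms(10) assms(13) l2(1) l2(2) h2 pz] by blast
  obtain La1 where La1: "geodesic_line La1" "\<And>t. \<rho>1 \<alpha> (La1 t) = La1 (t + translation_length (\<rho>1 \<alpha>))"
    using factor_alpha[OF act1 assms(10) l1(1) h1] by blast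
  obtain La2 where La2: "geodesic_line La2" "\<And>t. \<rho>2 \<alpha> (La2 t) = La2 (t + translation_length (\<rho>2 \<alpha>))"
    using factor_alpha[OF act2 assms(10) l2(1) h2] by blast
  have zp: "\<bar>real_of_int z\<bar> / real p > 0" using pz by simp
  have b1: "translation_length (\<rho>1 \<beta>) > 0" using Lb1(3) h1 zp pz by simp
  have b2: "translation_length (\<rho>2 \<beta>) > 0" using Lb2(3) h2 zp pz by simp
  have i1a: "\<And>x y. dist (\<rho>1 \<alpha> x) (\<rho>1 \<alpha> y) = dist x y" using isometry_dist[OF act_isom[OF act1 assms(10)]] .
  have i2a: "\<And>x y. dist (\<rho>2 \<alpha> x) (\<rho>2 \<alpha> y) = dist x y" using isometry_dist[OF act_isom[OF act2 assms(10)]] .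
  have i1b: "\<And>x y. dist (\<rho>1 \<beta> x) (\<rho>1 \<beta> y) = dist x y" using isometry_dist[OF act_isom[OF act1 assms(13)]] .
  have i2b: "\<And>x y. dist (\<rho>2 \<beta> x) (\<rho>2 \<beta> y) = dist x y" using isometry_dist[OF act_isom[OF act2 assms(13)]] .
  have PB: "translation_length (pmap (\<rho>1 \<beta>) (\<rho>2 \<beta>)) = sqrt ((translation_length (\<rho>1 \<beta>))^2 + (translation_length (\<rho>2 \<beta>))^2)
     \<and> (\<exists>L. is_axis (pmap (\<rho>1 \<beta>) (\<rho>2 \<beta>)) L)"
    by (rule prod_axis[OF Lb1(1) Lb1(2) Lb2(1) Lb2(2) b1 b2])
  have PA: "translation_length (pmap (\<rho>1 \<alpha>) (\<rho>2 \<alpha>)) = sqrt ((translation_length (\<rho>1 \<alpha>))^2 + (translation_length (\<rho>2 \<alpha>))^2)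
     \<and> (\<exists>L. is_axis (pmap (\<rho>1 \<alpha>) (\<rho>2 \<alpha>)) L)"
    by (rule prod_axis[OF La1(1) La1(2) La2(1) La2(2) h1 h2])
  have SB: "slope_isom (pmap (\<rho>1 \<beta>) (\<rho>2 \<beta>)) = ereal (translation_length (\<rho>1 \<beta>) / translation_length (\<rho>2 \<beta>))"
    using prod_slope_isom[OF _ i1b i2b _ b2] PB by blast
  have SA: "slope_isom (pmap (\<rho>1 \<alpha>) (\<rho>2 \<alpha>)) = ereal (translation_length (\<rho>1 \<alpha>) / translation_length (\<rho>2 \<alpha>))"
    using prod_slope_isom[OF _ i1a i2a _ h2] PA by blast
  have "translation_length (\<rho>1 \<beta>) / translation_length (\<rho>2 \<beta>) = translation_length (\<rho>1 \<alpha>) / translation_length (\<rho>2 \<alpha>)"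
  proof -
    have e1: "translation_length (\<rho>1 \<beta>) = translation_length (\<rho>1 \<alpha>) * (\<bar>real_of_int z\<bar> / real p)" using Lb1(3) by simp
    have e2: "translation_length (\<rho>2 \<beta>) = translation_length (\<rho>2 \<alpha>) * (\<bar>real_of_int z\<bar> / real p)" using Lb2(3) by simp
    show ?thesis unfolding e1 e2 using zp pz by simp
  qed
  then show ?thesis using SA SB unfolding diag_pmap by simp
qed


end
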